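(* Let $F$ be an algebraically closed field with $\operatorname{char}F=2$, $R=F[[x,y]]$, and let $f\in R^2$ be such that $j_3(f)$ is contact equivalent to one of $(x^3,\,y^3+x^2y)$, $(x^3,\,y^3)$, $(x^3+x^2y,\,y^3+\lambda x^2y)$ with $\lambda\neq 1$, $(x^2y,\,x^3+y^3)$. Then $j_3(f)$ is $3$-determined. In particular $f$ is contact equivalent to the corresponding one of these forms.
   Context: $\mathfrak m=\langle x,y\rangle$, $j_3(f)$ is the image of $f$ in $R^2/\mathfrak m^4R^2$. Contact equivalence: $g=U\cdot\phi(f)$ with $U\in GL(2,R)$, $\phi\in\operatorname{Aut}(R)$. An element $h$ is $k$-determined if every $g\in R^2$ with $j_k(g)=j_k(h)$ is contact equivalent to $h$. *)

theory Defs
  imports "HOL-Computational_Algebra.Polynomial"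
begin

text \<open>R = F[[x,y]]: a formal power series is its coefficient function;
  coefficient of x^i y^j is f (i,j). Every such function is a power series.\<close>
type_synonym 'a ps2 = "nat \<times> nat \<Rightarrow> 'a"

definition ps_const :: "'a::comm_ring_1 \<Rightarrow> 'a ps2" where
  "ps_const c = (\<lambda>(i,j). if i = 0 \<and> j = 0 then c else 0)"

definition ps_mon :: "'a::comm_ring_1 \<Rightarrow> nat \<Rightarrow> nat \<Rightarrow> 'a ps2" where
  "ps_mon c a b = (\<lambda>(i,j). if i = a \<and> j = b then c else 0)"

definition ps_add :: "'a::comm_ring_1 ps2 \<Rightarrow> 'a ps2 \<Rightarrow> 'a ps2" (infixl "+\<^sub>p" 65) where
  "ps_add f g = (\<lambda>k. f k + g k)"

definition ps_sub :: "'a::comm_ring_1 ps2 \<Rightarrow> 'a ps2 \<Rightarrow> 'a ps2" (infixl "-\<^sub>p" 65) where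
  "ps_sub f g = (\<lambda>k. f k - g k)"

definition ps_mul :: "'a::comm_ring_1 ps2 \<Rightarrow> 'a ps2 \<Rightarrow> 'a ps2" (infixl "*\<^sub>p" 70) where
  "ps_mul f g = (\<lambda>(i,j). \<Sum>a\<le>i. \<Sum>b\<le>j. f (a,b) * g (i - a, j - b))"

definition ps_unit :: "'a::comm_ring_1 ps2 \<Rightarrow> bool" where
  "ps_unit u \<longleftrightarrow> (\<exists>v. u *\<^sub>p v = ps_const 1)"

definition is_aut :: "('a::comm_ring_1 ps2 \<Rightarrow> 'a ps2) \<Rightarrow> bool" where
  "is_aut \<phi> \<longleftrightarrow> bij \<phi> \<and> (\<forall>f g. \<phi> (f +\<^sub>p g) = \<phi> f +\<^sub>p \<phi> g)
     \<and> (\<forall>f g. \<phi> (f *\<^sub>p g) = \<phi> f *\<^sub>p \<phi> g) \<and> (\<forall>c. \<phi> (ps_const c) = ps_const c)"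

type_synonym 'a mat2 = "('a ps2 \<times> 'a ps2) \<times> ('a ps2 \<times> 'a ps2)"

definition in_GL2 :: "'a::comm_ring_1 mat2 \<Rightarrow> bool" where
  "in_GL2 U = (case U of ((u11,u12),(u21,u22)) \<Rightarrow>
     ps_unit (u11 *\<^sub>p u22 -\<^sub>p u12 *\<^sub>p u21))"

definition mat_app :: "'a::comm_ring_1 mat2 \<Rightarrow> 'a ps2 \<times> 'a ps2 \<Rightarrow> 'a ps2 \<times> 'a ps2" where
  "mat_app U f = (case U of ((u11,u12),(u21,u22)) \<Rightarrow>
     (u11 *\<^sub>p fst f +\<^sub>p u12 *\<^sub>p snd f, u21 *\<^sub>p fst f +\<^sub>p u22 *\<^sub>p snd f))"

definition contact_equiv :: "'a::comm_ring_1 ps2 \<times> 'a ps2 \<Rightarrow> 'a ps2 \<times> 'a ps2 \<Rightarrow> bool" where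
  "contact_equiv f g \<longleftrightarrow> (\<exists>U \<phi>. in_GL2 U \<and> is_aut \<phi> \<and> g = mat_app U (\<phi> (fst f), \<phi> (snd f)))"

text \<open>k-jet: image in R^2/m^(k+1) R^2, represented by the truncation (terms of degree \<le> k).\<close>
definition ps_jet :: "nat \<Rightarrow> 'a::comm_ring_1 ps2 \<Rightarrow> 'a ps2" where
  "ps_jet k f = (\<lambda>(i,j). if i + j \<le> k then f (i,j) else 0)"

definition jet :: "nat \<Rightarrow> 'a::comm_ring_1 ps2 \<times> 'a ps2 \<Rightarrow> 'a ps2 \<times> 'a ps2" where
  "jet k f = (ps_jet k (fst f), ps_jet k (snd f))"

definition determined :: "nat \<Rightarrow> 'a::comm_ring_1 ps2 \<times> 'a ps2 \<Rightarrow> bool" where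
  "determined k h \<longleftrightarrow> (\<forall>g. jet k g = jet k h \<longrightarrow> contact_equiv g h)"

definition alg_closed :: "'a::field itself \<Rightarrow> bool" where
  "alg_closed _ \<longleftrightarrow> (\<forall>p :: 'a poly. degree p > 0 \<longrightarrow> (\<exists>x. poly p x = 0))"

end

theory Submission
  imports Defs "HOL-Computational_Algebra.Formal_Power_Series" "HOL-Library.Product_Plus"
begin

unbundle fps_syntax

type_synonym 'a S = "'a fps fps"

definition co :: "'a::field S \<Rightarrow> nat \<Rightarrow> nat \<Rightarrow> 'a" where "co F i j = F $ i $ j"
definition mk :: "(nat \<Rightarrow> nat \<Rightarrow> 'a::field) \<Rightarrow> 'a S" where "mk c = Abs_fps (\<lambda>i. Abs_fps (c i))"

lemma co_mk[simp]: "co (mk c) i j = c i j" by (simp add: co_def mk_def)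
lemma S_eqI: "(\<And>i j. co F i j = co G i j) \<Longrightarrow> F = G" by (simp add: co_def fps_ext)
lemma co_add[simp]: "co (F+G) i j = co F i j + co G i j" by (simp add: co_def)
lemma co_diff[simp]: "co (F-G) i j = co F i j - co G i j" by (simp add: co_def)
lemma co_uminus[simp]: "co (-F) i j = - co F i j" by (simp add: co_def)
lemma co_zero[simp]: "co 0 i j = 0" by (simp add: co_def)
lemma co_one: "co 1 i j = (if i = 0 \<and> j = 0 then 1 else 0)" by (simp add: co_def fps_one_nth)
lemma co_sum: "co (sum f A) i j = (\<Sum>x\<in>A. co (f x) i j)"
  by (induct A rule: infinite_finite_induct) (auto simp: co_def)
lemma co_mult: "co (F*G) i j = (\<Sum>a\<le>i. \<Sum>b\<le>j. co F a b * co G (i-a) (j-b))"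
  by (simp add: co_def fps_mult_nth fps_sum_nth atLeast0AtMost)

definition cc :: "'a::field \<Rightarrow> 'a S" where "cc c = fps_const (fps_const c)"
lemma co_cc: "co (cc c) i j = (if i = 0 \<and> j = 0 then c else 0)" by (simp add: co_def cc_def)
lemma co_cc_mult[simp]: "co (cc c * F) i j = c * co F i j" by (simp add: co_def cc_def)
lemma cc_add: "cc (a+b) = cc a + cc b" by (simp add: cc_def)
lemma cc_diff: "cc (a-b) = cc a - cc b" by (simp add: cc_def)
lemma cc_mult: "cc (a*b) = cc a * cc b" by (simp add: cc_def)
lemma cc_0[simp]: "cc 0 = 0" by (simp add: cc_def)
lemma cc_1[simp]: "cc 1 = 1" by (simp add: cc_def)

definition XX :: "'a::field S" where "XX = fps_X"
definition YY :: "'a::field S" where "YY = fps_const fps_X"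

lemma co_X_mult: "co (XX^a * F) i j = (if a \<le> i then co F (i-a) j else 0)"
  by (simp add: co_def XX_def fps_X_power_mult_nth)
lemma co_Y_mult: "co (YY^b * F) i j = (if b \<le> j then co F i (j-b) else 0)"
  by (simp add: co_def YY_def fps_X_power_mult_nth)
lemma co_XY_mult: "co (XX^a * YY^b * F) i j = (if a \<le> i \<and> b \<le> j then co F (i-a) (j-b) else 0)"
  by (simp add: mult.assoc co_X_mult co_Y_mult)
lemma co_XY: "co (XX^a * YY^b) i j = (if i = a \<and> j = b then 1 else 0)"
  using co_XY_mult[of a b 1 i j] by (auto simp: co_one)

definition hz :: "nat \<Rightarrow> 'a::field S \<Rightarrow> bool" where
  "hz k F \<longleftrightarrow> (\<forall>i j. i + j < k \<longrightarrow> co F i j = 0)"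

lemma hz_0[simp]: "hz 0 F" by (simp add: hz_def)
lemma hz_zero[simp]: "hz k 0" by (simp add: hz_def)
lemma hz_mono: "hz k F \<Longrightarrow> j \<le> k \<Longrightarrow> hz j F" by (auto simp: hz_def)
lemma hz_add[intro]: "hz k F \<Longrightarrow> hz k G \<Longrightarrow> hz k (F+G)" by (auto simp: hz_def)
lemma hz_diff[intro]: "hz k F \<Longrightarrow> hz k G \<Longrightarrow> hz k (F-G)" by (auto simp: hz_def)
lemma hz_uminus[intro]: "hz k F \<Longrightarrow> hz k (-F)" by (auto simp: hz_def)
lemma hz_sum: "(\<And>x. x \<in> A \<Longrightarrow> hz k (f x)) \<Longrightarrow> hz k (sum f A)"
  by (auto simp: hz_def co_sum intro!: sum.neutral)
lemma hz_cc_mult[intro]: "hz k F \<Longrightarrow> hz k (cc c * F)" by (auto simp: hz_def)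
lemma hz_mult: "hz a F \<Longrightarrow> hz b G \<Longrightarrow> hz (a+b) (F*G)"
  unfolding hz_def co_mult
proof (intro allI impI)
  fix i j assume A: "\<forall>i j. i + j < a \<longrightarrow> co F i j = 0" and B: "\<forall>i j. i + j < b \<longrightarrow> co G i j = 0"
    and ij: "i + j < a + b"
  show "(\<Sum>a\<le>i. \<Sum>b\<le>j. co F a b * co G (i - a) (j - b)) = 0"
  proof (intro sum.neutral ballI)
    fix a' b' assume "a' \<in> {..i}" "b' \<in> {..j}"
    then show "co F a' b' * co G (i - a') (j - b') = 0"
      using A B ij by (cases "a' + b' < a") auto
  qed
qed
lemma hz_mult': "hz a F \<Longrightarrow> hz b G \<Longrightarrow> k \<le> a + b \<Longrightarrow> hz k (F*G)"
  using hz_mult hz_mono by blast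
lemma hz_pow: "hz a F \<Longrightarrow> hz (a*n) (F^n)"
  by (induct n) (auto intro: hz_mult')
lemma hz_pow': "hz a F \<Longrightarrow> k \<le> a*n \<Longrightarrow> hz k (F^n)"
  using hz_pow hz_mono by blast
lemma hz_X[simp]: "hz 1 XX" by (auto simp: hz_def co_XY[of 1 0, simplified])
lemma hz_Y[simp]: "hz 1 YY" by (auto simp: hz_def co_XY[of 0 1, simplified])
lemma hz_X'[simp]: "hz (Suc 0) XX" using hz_X by simp
lemma hz_Y'[simp]: "hz (Suc 0) YY" using hz_Y by simp
lemma hz_XY: "hz (a+b) (XX^a * YY^b)" by (auto simp: hz_def co_XY)
lemma hz_all: "(\<And>k. hz k F) \<Longrightarrow> F = 0"
  by (rule S_eqI) (auto simp: hz_def)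
lemma hz_eq: "(\<And>k. hz k (F - G)) \<Longrightarrow> F = G"
  using hz_all[of "F-G"] by simp

definition E :: "'a::field S \<Rightarrow> 'a S \<Rightarrow> nat \<Rightarrow> 'a S \<Rightarrow> 'a S" where
  "E p q n F = (\<Sum>(a,b)\<in>{..n}\<times>{..n}. cc (co F a b) * (p^a * q^b))"

definition sub :: "'a::field S \<Rightarrow> 'a S \<Rightarrow> 'a S \<Rightarrow> 'a S" where
  "sub p q F = mk (\<lambda>i j. co (E p q (i+j) F) i j)"

lemma co_E: "co (E p q n F) i j = (\<Sum>(a,b)\<in>{..n}\<times>{..n}. co F a b * co (p^a * q^b) i j)"
  unfolding E_def co_sum by (simp add: case_prod_unfold)

lemma hz_pq: "hz 1 p \<Longrightarrow> hz 1 q \<Longrightarrow> k \<le> a + b \<Longrightarrow> hz k (p^a * q^b)"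
  by (rule hz_mult'[OF hz_pow[of 1 p a] hz_pow[of 1 q b]]) auto

lemma hz_E_mono:
  assumes p: "hz 1 p" and q: "hz 1 q" and mn: "m \<le> n"
  shows "hz (m+1) (E p q n F - E p q m F)"
proof -
  have sub: "{..m}\<times>{..m} \<subseteq> {..n}\<times>{..n}" using mn by auto
  have "E p q n F = (\<Sum>(a,b)\<in>{..n}\<times>{..n} - {..m}\<times>{..m}. cc (co F a b) * (p^a * q^b)) + E p q m F"
    unfolding E_def by (rule sum.subset_diff[OF sub]) auto
  moreover have "hz (m+1) (\<Sum>(a,b)\<in>{..n}\<times>{..n} - {..m}\<times>{..m}. cc (co F a b) * (p^a * q^b))"
  proof (rule hz_sum)
    fix x assume "x \<in> {..n}\<times>{..n} - {..m}\<times>{..m}"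
    then obtain a b where x: "x = (a,b)" and ab: "m + 1 \<le> a + b" by (cases x) auto
    show "hz (m + 1) (case x of (a, b) \<Rightarrow> cc (co F a b) * (p ^ a * q ^ b))"
      using hz_pq[OF p q ab] x by auto
  qed
  ultimately show ?thesis by simp
qed

lemma co_sub_E:
  assumes p: "hz 1 p" and q: "hz 1 q" and ij: "i + j \<le> n"
  shows "co (sub p q F) i j = co (E p q n F) i j"
  using hz_E_mono[OF p q ij, of F] by (auto simp: sub_def hz_def)

lemma hz_sub_E:
  assumes p: "hz 1 p" and q: "hz 1 q"
  shows "hz (n+1) (sub p q F - E p q n F)"
  using co_sub_E[OF p q] by (auto simp: hz_def)

lemma E_add: "E p q n (F+G) = E p q n F + E p q n G"
  unfolding E_def by (simp add: cc_add distrib_right sum.distrib case_prod_unfold)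

lemma sub_add: "sub p q (F+G) = sub p q F + sub p q G"
  by (rule S_eqI) (simp add: sub_def E_add)

lemma sub_diff: "sub p q (F-G) = sub p q F - sub p q G"
  using sub_add[of p q "F-G" G] by (simp add: algebra_simps)

lemma sum_single:
  assumes "finite A" "\<And>x. x \<in> A \<Longrightarrow> x \<noteq> x0 \<Longrightarrow> g x = 0"
  shows "sum g A = (if x0 \<in> A then g x0 else 0)"
proof (cases "x0 \<in> A")
  case True
  then have "sum g A = g x0 + sum g (A - {x0})" using assms(1) by (simp add: sum.remove)
  also have "sum g (A - {x0}) = 0" using assms(2) by (intro sum.neutral) auto
  finally show ?thesis using True by simp
next
  case False
  then show ?thesis using assms(2) by (auto intro!: sum.neutral)
qed

lemma sub_cc: "sub p q (cc c) = cc c"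
proof (rule S_eqI)
  fix i j
  have "co (sub p q (cc c)) i j = (\<Sum>(a,b)\<in>{..i+j}\<times>{..i+j}. co (cc c) a b * co (p^a * q^b) i j)"
    by (simp add: sub_def co_E)
  also have "\<dots> = (if (0,0) \<in> {..i+j}\<times>{..i+j} then (case (0,0) of (a,b) \<Rightarrow> co (cc c) a b * co (p^a * q^b) i j) else 0)"
    by (rule sum_single) (auto simp: co_cc split: if_splits)
  also have "\<dots> = co (cc c) i j" by (simp add: co_cc co_one)
  finally show "co (sub p q (cc c)) i j = co (cc c) i j" .
qed

lemma co_X: "co XX a b = (if a = 1 \<and> b = 0 then 1 else 0)"
  using co_XY[of 1 0 a b] by simp
lemma co_Y: "co YY a b = (if a = 0 \<and> b = 1 then 1 else 0)"
  using co_XY[of 0 1 a b] by simp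

lemma sub_X: assumes p: "hz 1 p" shows "sub p q XX = p"
proof (rule S_eqI)
  fix i j
  have "co (sub p q XX) i j = (\<Sum>(a,b)\<in>{..i+j}\<times>{..i+j}. co XX a b * co (p^a * q^b) i j)"
    by (simp add: sub_def co_E)
  also have "\<dots> = (if (1,0) \<in> {..i+j}\<times>{..i+j} then (case (1,0) of (a,b) \<Rightarrow> co XX a b * co (p^a * q^b) i j) else 0)"
    by (rule sum_single) (auto simp: co_X split: if_splits)
  also have "\<dots> = co p i j" using p by (cases "i+j") (auto simp: hz_def co_X)
  finally show "co (sub p q XX) i j = co p i j" .
qed

lemma sub_Y: assumes q: "hz 1 q" shows "sub p q YY = q"
proof (rule S_eqI)
  fix i j
  have "co (sub p q YY) i j = (\<Sum>(a,b)\<in>{..i+j}\<times>{..i+j}. co YY a b * co (p^a * q^b) i j)"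
    by (simp add: sub_def co_E)
  also have "\<dots> = (if (0,1) \<in> {..i+j}\<times>{..i+j} then (case (0,1) of (a,b) \<Rightarrow> co YY a b * co (p^a * q^b) i j) else 0)"
    by (rule sum_single) (auto simp: co_Y split: if_splits)
  also have "\<dots> = co q i j" using q by (cases "i+j") (auto simp: hz_def co_Y)
  finally show "co (sub p q YY) i j = co q i j" .
qed

lemma cc_sum: "cc (sum f A) = (\<Sum>x\<in>A. cc (f x))"
  by (induct A rule: infinite_finite_induct) (auto simp: cc_add)

lemma E_mult_hz:
  assumes p: "hz 1 p" and q: "hz 1 q"
  shows "hz (n+1) (E p q n F * E p q n G - E p q n (F*G))"
proof -
  define D where "D = {..n}\<times>{..n}"
  define h where "h = (\<lambda>((a,b),(c,d)). cc (co F a b * co G c d) * (p^(a+c) * q^(b+d)))"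
  define Q where "Q = {((a,b),(c,d)). a + c \<le> n \<and> b + d \<le> n}"
  have fD: "finite D" by (simp add: D_def)
  have QD: "Q \<subseteq> D \<times> D" by (auto simp: Q_def D_def)
  have "E p q n F * E p q n G = (\<Sum>x\<in>D. \<Sum>y\<in>D. (case x of (a,b) \<Rightarrow> cc (co F a b) * (p^a * q^b)) * (case y of (a,b) \<Rightarrow> cc (co G a b) * (p^a * q^b)))"
    unfolding E_def D_def by (rule sum_product)
  also have "\<dots> = (\<Sum>x\<in>D. \<Sum>y\<in>D. h (x,y))"
    by (intro sum.cong refl) (auto simp: h_def cc_mult power_add algebra_simps)
  also have "\<dots> = sum h (D \<times> D)" by (subst sum.cartesian_product) (simp add: split_def)
  also have "\<dots> = sum h (D \<times> D - Q) + sum h Q" by (rule sum.subset_diff[OF QD]) (simp add: fD)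
  finally have P: "E p q n F * E p q n G = sum h (D \<times> D - Q) + sum h Q" .
  have R: "hz (n+1) (sum h (D \<times> D - Q))"
  proof (rule hz_sum)
    fix x assume "x \<in> D \<times> D - Q"
    then obtain a b c d where x: "x = ((a,b),(c,d))" and "\<not> (a + c \<le> n \<and> b + d \<le> n)"
      by (auto simp: Q_def)
    then have le: "n + 1 \<le> (a+c) + (b+d)" by auto
    show "hz (n+1) (h x)" using hz_pq[OF p q le] by (auto simp: x h_def)
  qed
  have "E p q n (F*G) = (\<Sum>(e,f)\<in>D. \<Sum>(a,b)\<in>{..e}\<times>{..f}. cc (co F a b * co G (e-a) (f-b)) * (p^e * q^f))"
    unfolding E_def D_def co_mult cc_sum sum_distrib_right
    by (intro sum.cong refl) (auto simp: sum.cartesian_product)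
  also have "\<dots> = (\<Sum>(ef,ab)\<in>Sigma D (\<lambda>(e,f). {..e}\<times>{..f}). case ef of (e,f) \<Rightarrow> case ab of (a,b) \<Rightarrow> cc (co F a b * co G (e-a) (f-b)) * (p^e * q^f))"
    by (subst sum.Sigma[symmetric]) (auto simp: fD case_prod_unfold)
  also have "\<dots> = sum h Q"
    by (rule sum.reindex_bij_witness[where i = "\<lambda>((a,b),(c,d)). ((a+c,b+d),(a,b))" and j = "\<lambda>((e,f),(a,b)). ((a,b),(e-a,f-b))"])
       (auto simp: Q_def D_def h_def)
  finally have M: "E p q n (F*G) = sum h Q" .
  show ?thesis using P M R by simp
qed

lemma hz_mult_diff:
  assumes "hz k (A - A')" "hz k (B - B')"
  shows "hz k (A*B - A'*B')"
proof -
  have "A*B - A'*B' = (A - A')*B + A'*(B - B')" by (simp add: algebra_simps)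
  then show ?thesis using assms hz_mult'[of k _ 0] hz_mult'[of 0 _ k] by (metis add.commute add_0 hz_0 hz_add order_refl)
qed

lemma sub_mult:
  assumes p: "hz 1 p" and q: "hz 1 q"
  shows "sub p q (F*G) = sub p q F * sub p q G"
proof (rule S_eqI)
  fix i j :: nat
  let ?n = "i+j"
  have 1: "hz (?n+1) (sub p q F * sub p q G - E p q ?n F * E p q ?n G)"
    by (rule hz_mult_diff; rule hz_sub_E[OF p q])
  have 2: "hz (?n+1) (sub p q (F*G) - E p q ?n (F*G))" by (rule hz_sub_E[OF p q])
  have 3: "hz (?n+1) (E p q ?n F * E p q ?n G - E p q ?n (F*G))" by (rule E_mult_hz[OF p q])
  have "hz (?n+1) (sub p q (F*G) - sub p q F * sub p q G)"
  proof -
    have eq: "sub p q (F*G) - sub p q F * sub p q G = (sub p q (F*G) - E p q ?n (F*G)) - (E p q ?n F * E p q ?n G - E p q ?n (F*G)) - (sub p q F * sub p q G - E p q ?n F * E p q ?n G)"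
      by (simp add: algebra_simps)
    show ?thesis unfolding eq by (rule hz_diff[OF hz_diff[OF 2 3] 1])
  qed
  then show "co (sub p q (F*G)) i j = co (sub p q F * sub p q G) i j" by (auto simp: hz_def)
qed

lemma hz_sub:
  assumes p: "hz 1 p" and q: "hz 1 q" and F: "hz k F"
  shows "hz k (sub p q F)"
  unfolding hz_def
proof (intro allI impI)
  fix i j :: nat assume ij: "i + j < k"
  have "co (sub p q F) i j = (\<Sum>(a,b)\<in>{..i+j}\<times>{..i+j}. co F a b * co (p^a * q^b) i j)"
    by (simp add: sub_def co_E)
  also have "\<dots> = 0"
  proof (intro sum.neutral ballI)
    fix x assume "x \<in> {..i+j}\<times>{..i+j}"
    obtain a b where x: "x = (a,b)" by (cases x)
    show "(case x of (a,b) \<Rightarrow> co F a b * co (p^a * q^b) i j) = 0"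
    proof (cases "a + b < k")
      case True then show ?thesis using F by (simp add: x hz_def)
    next
      case False
      then have "hz (a+b) (p^a*q^b)" using hz_pq[OF p q] by simp
      then show ?thesis using False ij by (simp add: x hz_def)
    qed
  qed
  finally show "co (sub p q F) i j = 0" .
qed

lemma hz1_of_hz2: "hz 2 (p - XX) \<Longrightarrow> hz 1 p"
proof -
  assume "hz 2 (p - XX)"
  then have "hz 1 ((p - XX) + XX)" by (intro hz_add) (auto intro: hz_mono)
  then show ?thesis by simp
qed

lemma hz1_of_hz2': "hz 2 (q - YY) \<Longrightarrow> hz 1 q"
proof -
  assume "hz 2 (q - YY)"
  then have "hz 1 ((q - YY) + YY)" by (intro hz_add) (auto intro: hz_mono)
  then show ?thesis by simp
qed

lemma hz_pow_diff:
  assumes p: "hz 2 (p - XX)" shows "hz (a+1) (p^a - XX^a)"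
proof (induct a)
  case 0 then show ?case by simp
next
  case (Suc a)
  have eq: "p^Suc a - XX^Suc a = p*(p^a - XX^a) + (p - XX)*XX^a" by (simp add: algebra_simps)
  have "hz (Suc a + 1) (p*(p^a - XX^a))" by (rule hz_mult'[OF hz1_of_hz2[OF p] Suc]) simp
  moreover have "hz (Suc a + 1) ((p - XX)*XX^a)" by (rule hz_mult'[OF p hz_pow[OF hz_X]]) simp
  ultimately show ?case unfolding eq by auto
qed

lemma hz_pow_diff':
  assumes p: "hz 2 (p - YY)" shows "hz (a+1) (p^a - YY^a)"
proof (induct a)
  case 0 then show ?case by simp
next
  case (Suc a)
  have eq: "p^Suc a - YY^Suc a = p*(p^a - YY^a) + (p - YY)*YY^a" by (simp add: algebra_simps)
  have "hz (Suc a + 1) (p*(p^a - YY^a))" by (rule hz_mult'[OF hz1_of_hz2'[OF p] Suc]) simp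
  moreover have "hz (Suc a + 1) ((p - YY)*YY^a)" by (rule hz_mult'[OF p hz_pow[OF hz_Y]]) simp
  ultimately show ?case unfolding eq by auto
qed

lemma hz_pq_diff:
  assumes p: "hz 2 (p - XX)" and q: "hz 2 (q - YY)"
  shows "hz (a+b+1) (p^a*q^b - XX^a*YY^b)"
proof -
  have eq: "p^a*q^b - XX^a*YY^b = (p^a - XX^a)*q^b + XX^a*(q^b - YY^b)" by (simp add: algebra_simps)
  have "hz (a+b+1) ((p^a - XX^a)*q^b)"
    by (rule hz_mult'[OF hz_pow_diff[OF p] hz_pow[OF hz1_of_hz2'[OF q]]]) simp
  moreover have "hz (a+b+1) (XX^a*(q^b - YY^b))"
    by (rule hz_mult'[OF hz_pow[OF hz_X] hz_pow_diff'[OF q]]) simp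
  ultimately show ?thesis unfolding eq by auto
qed

lemma E_XY_hz: "hz (n+1) (F - E XX YY n F)"
  unfolding hz_def
proof (intro allI impI)
  fix i j :: nat assume ij: "i + j < n + 1"
  have "co (E XX YY n F) i j = (\<Sum>(a,b)\<in>{..n}\<times>{..n}. co F a b * co (XX^a * YY^b) i j)"
    by (simp add: co_E)
  also have "\<dots> = (if (i,j) \<in> {..n}\<times>{..n} then (case (i,j) of (a,b) \<Rightarrow> co F a b * co (XX^a * YY^b) i j) else 0)"
    by (rule sum_single) (auto simp: co_XY split: if_splits)
  also have "\<dots> = co F i j" using ij by (simp add: co_XY)
  finally show "co (F - E XX YY n F) i j = 0" by simp
qed

lemma sub_lead:
  assumes p: "hz 2 (p - XX)" and q: "hz 2 (q - YY)" and D: "hz k D"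
  shows "hz (k+1) (sub p q D - D)"
proof -
  have p1: "hz 1 p" and q1: "hz 1 q" using hz1_of_hz2 hz1_of_hz2' p q by auto
  have eq: "sub p q D - D = (sub p q D - E p q k D) + (E p q k D - E XX YY k D) - (D - E XX YY k D)"
    by simp
  have m: "E p q k D - E XX YY k D = (\<Sum>(a,b)\<in>{..k}\<times>{..k}. cc (co D a b) * (p^a*q^b - XX^a*YY^b))"
    unfolding E_def by (simp add: sum_subtractf[symmetric] case_prod_unfold right_diff_distrib)
  have "hz (k+1) (E p q k D - E XX YY k D)"
    unfolding m
  proof (rule hz_sum)
    fix x assume "x \<in> {..k}\<times>{..k}"
    obtain a b where x: "x = (a,b)" by (cases x)
    show "hz (k+1) (case x of (a,b) \<Rightarrow> cc (co D a b) * (p^a*q^b - XX^a*YY^b))"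
    proof (cases "a + b < k")
      case True then show ?thesis using D by (simp add: x hz_def)
    next
      case False
      then show ?thesis using hz_mono[OF hz_pq_diff[OF p q, of a b], of "k+1"] by (auto simp: x)
    qed
  qed
  then show ?thesis unfolding eq by (rule hz_diff[OF hz_add[OF hz_sub_E[OF p1 q1]] E_XY_hz])
qed

lemma sub_inj:
  assumes p: "hz 2 (p - XX)" and q: "hz 2 (q - YY)"
  shows "inj (sub p q)"
proof (rule injI)
  fix F G assume e: "sub p q F = sub p q G"
  have s0: "sub p q (F - G) = 0" using e by (simp add: sub_diff)
  have "hz k (F - G)" for k
  proof (induct k)
    case 0 then show ?case by simp
  next
    case (Suc k)
    have "hz (k+1) (sub p q (F-G) - (F-G))" by (rule sub_lead[OF p q Suc])
    then have "hz (k+1) (- (sub p q (F-G) - (F-G)))" by (rule hz_uminus)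
    then show ?case using s0 by simp
  qed
  then show "F = G" by (rule hz_eq)
qed

definition hp :: "nat \<Rightarrow> 'a::field S \<Rightarrow> 'a S" where
  "hp k G = mk (\<lambda>i j. if i + j = k then co G i j else 0)"

lemma hz_hp: "hz k (hp k G)" by (auto simp: hz_def hp_def)
lemma hz_hp_diff: "hz k G \<Longrightarrow> hz (k+1) (G - hp k G)" by (auto simp: hz_def hp_def)

lemma lim_exists:
  assumes s: "\<And>m. hz m (s (Suc m) - s m)"
  shows "\<exists>L. \<forall>m. hz m (L - s m)"
proof -
  have mono: "hz m (s m' - s m)" if "m \<le> m'" for m m'
    using that
  proof (induct m' rule: dec_induct)
    case base then show ?case by simp
  next
    case (step n)
    have e: "s (Suc n) - s m = (s (Suc n) - s n) + (s n - s m)" by simp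
    have h1: "hz m (s (Suc n) - s n)" using hz_mono[OF s[of n]] step by simp
    show ?case using step h1 e by (metis hz_add)
  qed
  define L where "L = mk (\<lambda>i j. co (s (i+j+1)) i j)"
  have "hz m (L - s m)" for m
    unfolding hz_def
  proof (intro allI impI)
    fix i j assume ij: "i + j < m"
    have "hz (i+j+1) (s m - s (i+j+1))" using mono ij by simp
    then show "co (L - s m) i j = 0" by (auto simp: hz_def L_def)
  qed
  then show ?thesis by blast
qed

lemma sub_surj:
  assumes p: "hz 2 (p - XX)" and q: "hz 2 (q - YY)"
  shows "surj (sub p q)"
proof -
  have p1: "hz 1 p" and q1: "hz 1 q" using hz1_of_hz2 hz1_of_hz2' p q by auto
  have "T \<in> range (sub p q)" for T
  proof -
    define s where "s = rec_nat 0 (\<lambda>k Fk. Fk + hp k (T - sub p q Fk))"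
    have s0: "s 0 = 0" and sS: "s (Suc k) = s k + hp k (T - sub p q (s k))" for k
      by (simp_all add: s_def)
    have inv: "hz k (T - sub p q (s k))" for k
    proof (induct k)
      case 0 then show ?case by simp
    next
      case (Suc k)
      let ?R = "T - sub p q (s k)"
      have eq: "T - sub p q (s (Suc k)) = (?R - hp k ?R) - (sub p q (hp k ?R) - hp k ?R)"
        by (simp add: sS sub_add)
      show ?case unfolding eq
        using hz_diff[OF hz_hp_diff[OF Suc] sub_lead[OF p q hz_hp[of k ?R]]] by simp
    qed
    have "hz m (s (Suc m) - s m)" for m by (simp add: sS hz_hp)
    then obtain L where L: "\<And>m. hz m (L - s m)" using lim_exists by blast
    have "hz k (T - sub p q L)" for k
    proof -
      have e: "T - sub p q L = (T - sub p q (s k)) - sub p q (L - s k)" by (simp add: sub_diff)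
      show ?thesis unfolding e by (rule hz_diff[OF inv[of k] hz_sub[OF p1 q1 L[of k]]])
    qed
    then have "T = sub p q L" by (rule hz_eq)
    then show ?thesis by simp
  qed
  then show ?thesis by auto
qed

definition autS :: "('a::field S \<Rightarrow> 'a S) \<Rightarrow> bool" where
  "autS \<Phi> \<longleftrightarrow> bij \<Phi> \<and> (\<forall>F G. \<Phi> (F+G) = \<Phi> F + \<Phi> G) \<and> (\<forall>F G. \<Phi> (F*G) = \<Phi> F * \<Phi> G)
     \<and> (\<forall>c. \<Phi> (cc c) = cc c)"

lemma aut_sub:
  assumes p: "hz 2 (p - XX)" and q: "hz 2 (q - YY)"
  shows "autS (sub p q)"
  using sub_inj[OF p q] sub_surj[OF p q] sub_add sub_mult[OF hz1_of_hz2[OF p] hz1_of_hz2'[OF q]] sub_cc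
  by (auto simp: autS_def bij_def)

definition unitS :: "'a::field S \<Rightarrow> bool" where "unitS u \<longleftrightarrow> (\<exists>v. u * v = 1)"
definition detS :: "('a::field S \<times> 'a S) \<times> ('a S \<times> 'a S) \<Rightarrow> 'a S" where
  "detS U = (case U of ((a,b),(c,d)) \<Rightarrow> a*d - b*c)"
definition GLS :: "('a::field S \<times> 'a S) \<times> ('a S \<times> 'a S) \<Rightarrow> bool" where
  "GLS U \<longleftrightarrow> unitS (detS U)"
definition appS :: "('a::field S \<times> 'a S) \<times> ('a S \<times> 'a S) \<Rightarrow> 'a S \<times> 'a S \<Rightarrow> 'a S \<times> 'a S" where
  "appS U w = (case U of ((a,b),(c,d)) \<Rightarrow> (a * fst w + b * snd w, c * fst w + d * snd w))"
definition mapM :: "('a::field S \<Rightarrow> 'a S) \<Rightarrow> ('a S \<times> 'a S) \<times> ('a S \<times> 'a S) \<Rightarrow> ('a S \<times> 'a S) \<times> ('a S \<times> 'a S)" where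
  "mapM \<Phi> U = (case U of ((a,b),(c,d)) \<Rightarrow> ((\<Phi> a, \<Phi> b),(\<Phi> c, \<Phi> d)))"
definition mapP :: "('a::field S \<Rightarrow> 'a S) \<Rightarrow> 'a S \<times> 'a S \<Rightarrow> 'a S \<times> 'a S" where
  "mapP \<Phi> w = (\<Phi> (fst w), \<Phi> (snd w))"
definition mulM :: "('a::field S \<times> 'a S) \<times> ('a S \<times> 'a S) \<Rightarrow> ('a S \<times> 'a S) \<times> ('a S \<times> 'a S) \<Rightarrow> ('a S \<times> 'a S) \<times> ('a S \<times> 'a S)" where
  "mulM V U = (case V of ((a,b),(c,d)) \<Rightarrow> case U of ((e,f),(g,h)) \<Rightarrow>
     ((a*e + b*g, a*f + b*h), (c*e + d*g, c*f + d*h)))"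
definition ceq :: "'a::field S \<times> 'a S \<Rightarrow> 'a S \<times> 'a S \<Rightarrow> bool" where
  "ceq F G \<longleftrightarrow> (\<exists>U \<Phi>. GLS U \<and> autS \<Phi> \<and> G = appS U (mapP \<Phi> F))"
definition hzP :: "nat \<Rightarrow> 'a::field S \<times> 'a S \<Rightarrow> bool" where
  "hzP k w \<longleftrightarrow> hz k (fst w) \<and> hz k (snd w)"

lemma aut_add: "autS \<Phi> \<Longrightarrow> \<Phi> (F+G) = \<Phi> F + \<Phi> G" by (simp add: autS_def)
lemma aut_mult: "autS \<Phi> \<Longrightarrow> \<Phi> (F*G) = \<Phi> F * \<Phi> G" by (simp add: autS_def)
lemma aut_cc: "autS \<Phi> \<Longrightarrow> \<Phi> (cc c) = cc c" by (simp add: autS_def)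
lemma aut_bij: "autS \<Phi> \<Longrightarrow> bij \<Phi>" by (simp add: autS_def)
lemma aut_zero: "autS \<Phi> \<Longrightarrow> \<Phi> 0 = 0" using aut_cc[of \<Phi> 0] by simp
lemma aut_one: "autS \<Phi> \<Longrightarrow> \<Phi> 1 = 1" using aut_cc[of \<Phi> 1] by simp
lemma aut_diff: "autS \<Phi> \<Longrightarrow> \<Phi> (F-G) = \<Phi> F - \<Phi> G"
  using aut_add[of \<Phi> "F-G" G] by (simp add: algebra_simps)

lemma aut_inv: assumes A: "autS \<Phi>" shows "autS (inv \<Phi>)"
proof -
  have b: "bij \<Phi>" using A by (simp add: autS_def)
  have fi: "\<Phi> (inv \<Phi> y) = y" for y using b by (simp add: bij_is_surj surj_f_inv_f)
  have if_: "inv \<Phi> (\<Phi> y) = y" for y using b by (simp add: bij_is_inj)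
  show ?thesis unfolding autS_def
  proof (intro conjI allI)
    show "bij (inv \<Phi>)" using b by (rule bij_imp_bij_inv)
    fix F G
    show "inv \<Phi> (F+G) = inv \<Phi> F + inv \<Phi> G"
      by (metis aut_add[OF A] fi if_)
    show "inv \<Phi> (F*G) = inv \<Phi> F * inv \<Phi> G"
      by (metis aut_mult[OF A] fi if_)
  next
    fix c show "inv \<Phi> (cc c) = cc c" by (metis aut_cc[OF A] if_)
  qed
qed

lemma aut_comp: "autS \<Phi> \<Longrightarrow> autS \<Psi> \<Longrightarrow> autS (\<Psi> \<circ> \<Phi>)"
  by (simp add: autS_def bij_comp)

lemma mapP_app: "autS \<Phi> \<Longrightarrow> mapP \<Phi> (appS U w) = appS (mapM \<Phi> U) (mapP \<Phi> w)"
  by (cases U) (auto simp: mapP_def appS_def mapM_def aut_add aut_mult)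

lemma unitS_mult: "unitS a \<Longrightarrow> unitS b \<Longrightarrow> unitS (a*b)"
  unfolding unitS_def by (metis mult.assoc mult.left_commute mult_1_right)

lemma GL_map: assumes "GLS U" "autS \<Phi>" shows "GLS (mapM \<Phi> U)"
proof -
  obtain v where v: "detS U * v = 1" using assms(1) by (auto simp: GLS_def unitS_def)
  have "\<Phi> (detS U) = detS (mapM \<Phi> U)"
    by (cases U) (auto simp: detS_def mapM_def aut_diff[OF assms(2)] aut_mult[OF assms(2)])
  moreover have "\<Phi> (detS U) * \<Phi> v = 1" using v aut_mult[OF assms(2)] aut_one[OF assms(2)] by metis
  ultimately show ?thesis by (auto simp: GLS_def unitS_def)
qed

lemma app_mul: "appS V (appS U w) = appS (mulM V U) w"
  by (cases V; cases U) (auto simp: appS_def mulM_def algebra_simps)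

lemma GL_mul: assumes "GLS V" "GLS U" shows "GLS (mulM V U)"
proof -
  have "detS (mulM V U) = detS V * detS U"
    by (cases V; cases U) (auto simp: detS_def mulM_def algebra_simps)
  then show ?thesis using assms unitS_mult by (auto simp: GLS_def)
qed

lemma GL_inv: assumes "GLS U" shows "\<exists>U'. GLS U' \<and> (\<forall>w. appS U' (appS U w) = w)"
proof -
  obtain a b c d where U: "U = ((a,b),(c,d))" by (cases U) auto
  obtain v where v: "(a*d - b*c) * v = 1" using assms by (auto simp: GLS_def unitS_def detS_def U)
  define U' where "U' = ((v*d, - v*b), (- v*c, v*a))"
  have "detS U' = v * ((a*d - b*c) * v)" by (simp add: U'_def detS_def algebra_simps)
  then have "detS U' = v" using v by simp
  then have "detS U' * (a*d - b*c) = 1" using v by (simp add: mult.commute)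
  then have g: "GLS U'" by (auto simp: GLS_def unitS_def)
  have "appS U' (appS U w) = w" for w
  proof -
    have "appS U' (appS U w) = (((a*d - b*c) * v) * fst w, ((a*d - b*c) * v) * snd w)"
      by (simp add: U'_def U appS_def algebra_simps)
    then show ?thesis using v by simp
  qed
  then show ?thesis using g by blast
qed

lemma ceq_sym: assumes "ceq F G" shows "ceq G F"
proof -
  obtain U \<Phi> where U: "GLS U" and P: "autS \<Phi>" and G: "G = appS U (mapP \<Phi> F)"
    using assms by (auto simp: ceq_def)
  obtain U' where U': "GLS U'" and inv: "\<And>w. appS U' (appS U w) = w" using GL_inv[OF U] by blast
  have Pi: "autS (inv \<Phi>)" by (rule aut_inv[OF P])
  have b: "bij \<Phi>" using P by (simp add: autS_def)
  have "appS U' G = mapP \<Phi> F" using G inv by simp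
  then have "mapP (inv \<Phi>) (appS U' G) = F"
    using b by (simp add: mapP_def bij_is_inj)
  then have "F = appS (mapM (inv \<Phi>) U') (mapP (inv \<Phi>) G)" using mapP_app[OF Pi] by simp
  then show ?thesis unfolding ceq_def using GL_map[OF U' Pi] Pi by blast
qed

lemma ceq_trans: assumes "ceq F G" "ceq G H" shows "ceq F H"
proof -
  obtain U \<Phi> where U: "GLS U" and P: "autS \<Phi>" and G: "G = appS U (mapP \<Phi> F)"
    using assms(1) by (auto simp: ceq_def)
  obtain V \<Psi> where V: "GLS V" and Q: "autS \<Psi>" and H: "H = appS V (mapP \<Psi> G)"
    using assms(2) by (auto simp: ceq_def)
  have "H = appS V (appS (mapM \<Psi> U) (mapP \<Psi> (mapP \<Phi> F)))" using H G mapP_app[OF Q] by simp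
  also have "\<dots> = appS (mulM V (mapM \<Psi> U)) (mapP (\<Psi> \<circ> \<Phi>) F)"
    by (simp add: app_mul mapP_def)
  finally show ?thesis unfolding ceq_def using GL_mul[OF V GL_map[OF U Q]] aut_comp[OF P Q] by blast
qed

lemma unitS_iff: "unitS (F::'a::field S) \<longleftrightarrow> co F 0 0 \<noteq> 0"
proof
  assume "unitS F"
  then obtain G where "F * G = 1" by (auto simp: unitS_def)
  then have "co (F*G) 0 0 = 1" by (simp add: co_one)
  then show "co F 0 0 \<noteq> 0" by (auto simp: co_mult)
next
  assume h: "co F 0 0 \<noteq> 0"
  then have "(F$0)$0 \<noteq> 0" by (simp add: co_def)
  then have "F$0 * inverse (F$0) = 1" by (rule inverse_mult_eq_1')
  then have "F * fps_right_inverse F (inverse (F$0)) = 1" by (rule fps_right_inverse)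
  then show "unitS F" by (auto simp: unitS_def)
qed

lemma hz1_iff: "hz 1 F \<longleftrightarrow> co F 0 0 = 0" by (auto simp: hz_def)
lemma hz1_iff': "hz (Suc 0) F \<longleftrightarrow> co F 0 0 = 0" by (auto simp: hz_def)

lemma aut_hz1: assumes A: "autS \<Phi>" and F: "hz 1 F" shows "hz 1 (\<Phi> F)"
proof (rule ccontr)
  assume "\<not> hz 1 (\<Phi> F)"
  then have "unitS (\<Phi> F)" by (simp add: hz1_iff' unitS_iff)
  then obtain G where G: "\<Phi> F * G = 1" by (auto simp: unitS_def)
  have Ai: "autS (inv \<Phi>)" by (rule aut_inv[OF A])
  have b: "bij \<Phi>" using A by (simp add: autS_def)
  have "inv \<Phi> (\<Phi> F * G) = F * inv \<Phi> G" using aut_mult[OF Ai] b by (simp add: bij_is_inj)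
  then have "F * inv \<Phi> G = 1" using G aut_one[OF Ai] by simp
  then have "unitS F" by (auto simp: unitS_def)
  then show False using F by (simp add: unitS_iff hz1_iff')
qed

lemma hz_decomp:
  assumes "hz (k+1) F"
  shows "\<exists>A B. F = XX*A + YY*B \<and> hz k A \<and> hz k B"
proof -
  define A where "A = mk (\<lambda>i j. co F (i+1) j)"
  define B where "B = mk (\<lambda>i j. if i = 0 then co F 0 (j+1) else 0)"
  have "F = XX*A + YY*B"
  proof (rule S_eqI)
    fix i j
    show "co F i j = co (XX*A + YY*B) i j"
      using co_X_mult[of 1 A i j] co_Y_mult[of 1 B i j] assms
      by (cases i; cases j) (auto simp: A_def B_def hz_def)
  qed
  moreover have "hz k A" "hz k B" using assms by (auto simp: hz_def A_def B_def)
  ultimately show ?thesis by blast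
qed

lemma aut_hz: assumes A: "autS \<Phi>" shows "hz k F \<Longrightarrow> hz k (\<Phi> F)"
proof (induct k arbitrary: F)
  case 0 then show ?case by simp
next
  case (Suc k)
  obtain a b where F: "F = XX*a + YY*b" and a: "hz k a" and b: "hz k b"
    using hz_decomp[of k F] Suc by auto
  have "\<Phi> F = \<Phi> XX * \<Phi> a + \<Phi> YY * \<Phi> b" using F aut_add[OF A] aut_mult[OF A] by simp
  moreover have "hz (Suc k) (\<Phi> XX * \<Phi> a)"
    using hz_mult'[OF aut_hz1[OF A hz_X] Suc(1)[OF a]] by simp
  moreover have "hz (Suc k) (\<Phi> YY * \<Phi> b)"
    using hz_mult'[OF aut_hz1[OF A hz_Y] Suc(1)[OF b]] by simp
  ultimately show ?case by (metis hz_add)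
qed

lemma hzP_app: "hzP k w \<Longrightarrow> hzP k (appS U w)"
  by (cases U) (auto simp: hzP_def appS_def intro!: hz_add hz_mult'[of 0 _ k])

lemma hzP_map: "autS \<Phi> \<Longrightarrow> hzP k w \<Longrightarrow> hzP k (mapP \<Phi> w)"
  by (auto simp: hzP_def mapP_def aut_hz)

definition psc :: "'a::field S \<Rightarrow> 'a S \<times> 'a S \<Rightarrow> 'a S \<times> 'a S" where
  "psc s w = (s * fst w, s * snd w)"
definition hzM :: "nat \<Rightarrow> ('a::field S \<times> 'a S) \<times> ('a S \<times> 'a S) \<Rightarrow> bool" where
  "hzM k U \<longleftrightarrow> hzP k (fst U) \<and> hzP k (snd U)"
definition IM :: "('a::field S \<times> 'a S) \<times> ('a S \<times> 'a S)" where
  "IM = ((1,0),(0,1))"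

lemma hzP_add: "hzP k v \<Longrightarrow> hzP k w \<Longrightarrow> hzP k (v + w)" by (auto simp: hzP_def intro: hz_add)
lemma hzP_diff: "hzP k v \<Longrightarrow> hzP k w \<Longrightarrow> hzP k (v - w)" by (auto simp: hzP_def intro: hz_diff)
lemma hzP_mono: "hzP k v \<Longrightarrow> j \<le> k \<Longrightarrow> hzP j v" by (auto simp: hzP_def intro: hz_mono)
lemma hzP_psc: "hz a s \<Longrightarrow> hzP b w \<Longrightarrow> a + b \<ge> k \<Longrightarrow> hzP k (psc s w)"
  by (auto simp: hzP_def psc_def intro: hz_mult')
lemma hzP_appM: "hzM a U \<Longrightarrow> hzP b w \<Longrightarrow> a + b \<ge> k \<Longrightarrow> hzP k (appS U w)"
  by (cases U) (auto simp: hzM_def hzP_def appS_def intro!: hz_add hz_mult')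
lemma hzM_mono: "hzM k v \<Longrightarrow> j \<le> k \<Longrightarrow> hzM j v" by (auto simp: hzM_def intro: hzP_mono)
lemma hzP_eq: "(\<And>k. hzP k (v - w)) \<Longrightarrow> v = w"
  by (cases v; cases w) (auto simp: hzP_def intro: hz_eq)
lemma hzP_0[simp]: "hzP 0 w" by (simp add: hzP_def)
lemma hzM_0[simp]: "hzM 0 w" by (simp add: hzM_def)

lemma step_ok:
  fixes nf :: "'a::field S \<Rightarrow> 'a S \<Rightarrow> 'a S \<times> 'a S"
  assumes T: "\<And>k p q dp dq. 4 \<le> k \<Longrightarrow> hz 2 (p - XX) \<Longrightarrow> hz 2 (q - YY) \<Longrightarrow> hz (k-2) dp \<Longrightarrow> hz (k-2) dq
       \<Longrightarrow> hzP (k+1) (nf (p+dp) (q+dq) - nf p q - (psc dp d1 + psc dq d2))"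
    and L: "\<And>j p q p' q'. hz 1 p \<Longrightarrow> hz 1 q \<Longrightarrow> hz 1 p' \<Longrightarrow> hz 1 q' \<Longrightarrow> hz j (p - p') \<Longrightarrow> hz j (q - q')
       \<Longrightarrow> hzP (j+2) (nf p q - nf p' q')"
    and D: "hzP 2 d1" "hzP 2 d2"
    and k: "4 \<le> k" and U: "hzM 1 (U - IM)" and p: "hz 2 (p - XX)" and q: "hz 2 (q - YY)"
    and W: "hzM (k-3) W" and dp: "hz (k-2) dp" and dq: "hz (k-2) dq"
    and R: "hzP (k+1) ((g - appS U (nf p q)) - (appS W (nf XX YY) + psc dp d1 + psc dq d2))"
  shows "hzP (k+1) (g - appS (U+W) (nf (p+dp) (q+dq)))"
proof -
  define \<Delta> where "\<Delta> = nf (p+dp) (q+dq) - nf p q"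
  define Dd where "Dd = psc dp d1 + psc dq d2"
  have eq: "g - appS (U+W) (nf (p+dp) (q+dq)) =
     ((g - appS U (nf p q)) - (appS W (nf XX YY) + psc dp d1 + psc dq d2)) - appS U (\<Delta> - Dd)
     - appS (U - IM) Dd - appS W (nf (p+dp) (q+dq) - nf XX YY)"
    unfolding \<Delta>_def Dd_def
    by (cases U; cases W; cases "nf (p+dp) (q+dq)"; cases "nf p q"; cases "nf XX YY"; cases d1; cases d2)
       (auto simp: appS_def psc_def IM_def algebra_simps)
  have 1: "hzP (k+1) (appS U (\<Delta> - Dd))"
    unfolding \<Delta>_def Dd_def by (rule hzP_appM[OF hzM_0 T[OF k p q dp dq]]) simp
  have "hzP k Dd" unfolding Dd_def
    by (rule hzP_add; rule hzP_psc[OF _ D(1)] hzP_psc[OF _ D(2)]) (use dp dq k in auto)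
  then have 2: "hzP (k+1) (appS (U - IM) Dd)" by (rule hzP_appM[OF U]) simp
  have p1: "hz 1 p" "hz 1 q" using p q hz1_of_hz2 hz1_of_hz2' by auto
  have dp2: "hz 2 dp" "hz 2 dq" using hz_mono[OF dp, of 2] hz_mono[OF dq, of 2] k by auto
  have p'2: "hz 2 (p + dp - XX)" "hz 2 (q + dq - YY)"
    using hz_add[OF p dp2(1)] hz_add[OF q dp2(2)] by (simp_all add: algebra_simps)
  have "hzP (2+2) (nf (p+dp) (q+dq) - nf XX YY)"
    by (rule L) (use p'2 hz1_of_hz2 hz1_of_hz2' in auto)
  then have 3: "hzP (k+1) (appS W (nf (p+dp) (q+dq) - nf XX YY))"
    by (rule hzP_appM[OF W]) (use k in simp)
  show ?thesis unfolding eq by (rule hzP_diff[OF hzP_diff[OF hzP_diff[OF R 1] 2] 3])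
qed

lemma appS_IM[simp]: "appS IM w = w" by (simp add: appS_def IM_def)

lemma hzM_zero[simp]: "hzM k 0" by (simp add: hzM_def hzP_def)
lemma hzM_add: "hzM k U \<Longrightarrow> hzM k W \<Longrightarrow> hzM k (U + W)" by (auto simp: hzM_def intro: hzP_add)

lemma main_iter:
  fixes nf :: "'a::field S \<Rightarrow> 'a S \<Rightarrow> 'a S \<times> 'a S"
  assumes T: "\<And>k p q dp dq. 4 \<le> k \<Longrightarrow> hz 2 (p - XX) \<Longrightarrow> hz 2 (q - YY) \<Longrightarrow> hz (k-2) dp \<Longrightarrow> hz (k-2) dq
       \<Longrightarrow> hzP (k+1) (nf (p+dp) (q+dq) - nf p q - (psc dp da + psc dq db))"
    and L: "\<And>j p q p' q'. hz 1 p \<Longrightarrow> hz 1 q \<Longrightarrow> hz 1 p' \<Longrightarrow> hz 1 q' \<Longrightarrow> hz j (p - p') \<Longrightarrow> hz j (q - q')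
       \<Longrightarrow> hzP (j+2) (nf p q - nf p' q')"
    and D: "hzP 2 da" "hzP 2 db"
    and Sol: "\<And>k r. 4 \<le> k \<Longrightarrow> hzP k r \<Longrightarrow> \<exists>W dp dq. hzM (k-3) W \<and> hz (k-2) dp \<and> hz (k-2) dq \<and>
        hzP (k+1) (r - (appS W (nf XX YY) + psc dp da + psc dq db))"
    and g: "hzP 4 (g - nf XX YY)"
  shows "\<exists>U p q. hzM 1 (U - IM) \<and> hz 2 (p - XX) \<and> hz 2 (q - YY) \<and> g = appS U (nf p q)"
proof -
  define Good where "Good = (\<lambda>k r (x::(('a S \<times> 'a S) \<times> ('a S \<times> 'a S)) \<times> 'a S \<times> 'a S).
     hzM (k-3) (fst x) \<and> hz (k-2) (fst (snd x)) \<and> hz (k-2) (snd (snd x)) \<and>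
     hzP (k+1) (r - (appS (fst x) (nf XX YY) + psc (fst (snd x)) da + psc (snd (snd x)) db)))"
  define sol where "sol = (\<lambda>k r. SOME x. Good k r x)"
  have solP: "Good k r (sol k r)" if k4: "4 \<le> k" and hr: "hzP k r" for k r
  proof -
    obtain W dp dq where "hzM (k-3) W \<and> hz (k-2) dp \<and> hz (k-2) dq \<and>
        hzP (k+1) (r - (appS W (nf XX YY) + psc dp da + psc dq db))" using Sol[OF k4 hr] by blast
    then have "Good k r (W,dp,dq)" by (simp add: Good_def)
    then show ?thesis unfolding sol_def by (rule someI)
  qed
  define stepf where "stepf = (\<lambda>m (s::(('a S \<times> 'a S) \<times> ('a S \<times> 'a S)) \<times> 'a S \<times> 'a S).
     (let x = sol (m+4) (g - appS (fst s) (nf (fst (snd s)) (snd (snd s))))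
      in (fst s + fst x, fst (snd s) + fst (snd x), snd (snd s) + snd (snd x))))"
  define st where "st = rec_nat (IM, XX, YY) stepf"
  define Us where "Us = (\<lambda>m. fst (st m))"
  define ps where "ps = (\<lambda>m. fst (snd (st m)))"
  define qs where "qs = (\<lambda>m. snd (snd (st m)))"
  have st0: "Us 0 = IM" "ps 0 = XX" "qs 0 = YY" by (simp_all add: Us_def ps_def qs_def st_def)
  define x where "x = (\<lambda>m. sol (m+4) (g - appS (Us m) (nf (ps m) (qs m))))"
  have stS: "Us (Suc m) = Us m + fst (x m)" "ps (Suc m) = ps m + fst (snd (x m))"
    "qs (Suc m) = qs m + snd (snd (x m))" for m
    by (simp_all add: Us_def ps_def qs_def st_def stepf_def x_def Let_def)
  have inv: "hzM 1 (Us m - IM) \<and> hz 2 (ps m - XX) \<and> hz 2 (qs m - YY) \<and> hzP (m+4) (g - appS (Us m) (nf (ps m) (qs m)))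
     \<and> Good (m+4) (g - appS (Us m) (nf (ps m) (qs m))) (x m)" for m
  proof (induct m)
    case 0
    have "hzP (0+4) (g - appS (Us 0) (nf (ps 0) (qs 0)))" using g by (simp add: st0)
    moreover then have "Good (0+4) (g - appS (Us 0) (nf (ps 0) (qs 0))) (x 0)"
      unfolding x_def by (intro solP) auto
    ultimately show ?case by (simp add: st0)
  next
    case (Suc m)
    let ?k = "m+4"
    have I: "hzM 1 (Us m - IM)" "hz 2 (ps m - XX)" "hz 2 (qs m - YY)"
      and G: "Good ?k (g - appS (Us m) (nf (ps m) (qs m))) (x m)" using Suc by auto
    have W: "hzM (?k-3) (fst (x m))" and dp: "hz (?k-2) (fst (snd (x m)))" and dq: "hz (?k-2) (snd (snd (x m)))"
      and R: "hzP (?k+1) ((g - appS (Us m) (nf (ps m) (qs m))) - (appS (fst (x m)) (nf XX YY) + psc (fst (snd (x m))) da + psc (snd (snd (x m))) db))"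
      using G by (auto simp: Good_def)
    have new: "hzP (?k+1) (g - appS (Us (Suc m)) (nf (ps (Suc m)) (qs (Suc m))))"
      unfolding stS by (rule step_ok[OF T L D _ I W dp dq R]) auto
    have a: "hzM 1 (Us (Suc m) - IM)"
    proof -
      have e: "Us (Suc m) - IM = (Us m - IM) + fst (x m)" by (simp add: stS algebra_simps)
      show ?thesis unfolding e by (rule hzM_add[OF I(1) hzM_mono[OF W]]) simp
    qed
    have b: "hz 2 (ps (Suc m) - XX)" "hz 2 (qs (Suc m) - YY)"
    proof -
      have e1: "ps (Suc m) - XX = (ps m - XX) + fst (snd (x m))" by (simp add: stS algebra_simps)
      show "hz 2 (ps (Suc m) - XX)" unfolding e1 by (rule hz_add[OF I(2) hz_mono[OF dp]]) simp
      have e2: "qs (Suc m) - YY = (qs m - YY) + snd (snd (x m))" by (simp add: stS algebra_simps)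
      show "hz 2 (qs (Suc m) - YY)" unfolding e2 by (rule hz_add[OF I(3) hz_mono[OF dq]]) simp
    qed
    have "Good (Suc m + 4) (g - appS (Us (Suc m)) (nf (ps (Suc m)) (qs (Suc m)))) (x (Suc m))"
      unfolding x_def by (rule solP) (use new in auto)
    then show ?case using a b new by simp
  qed
  have incU: "hzM (m+1) (Us (Suc m) - Us m)" for m
    using inv[of m] by (simp add: stS Good_def)
  have incp: "hz (m+2) (ps (Suc m) - ps m)" "hz (m+2) (qs (Suc m) - qs m)" for m
    using inv[of m] by (simp_all add: stS Good_def)
  have cU: "hz m (fst (fst (Us (Suc m))) - fst (fst (Us m)))" "hz m (snd (fst (Us (Suc m))) - snd (fst (Us m)))"
    "hz m (fst (snd (Us (Suc m))) - fst (snd (Us m)))" "hz m (snd (snd (Us (Suc m))) - snd (snd (Us m)))" for m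
  proof -
    have h: "hzM (m+1) (Us (Suc m) - Us m)" by (rule incU)
    then have "hz (m+1) (fst (fst (Us (Suc m) - Us m)))" "hz (m+1) (snd (fst (Us (Suc m) - Us m)))"
      "hz (m+1) (fst (snd (Us (Suc m) - Us m)))" "hz (m+1) (snd (snd (Us (Suc m) - Us m)))"
      unfolding hzM_def hzP_def by blast+
    then show "hz m (fst (fst (Us (Suc m))) - fst (fst (Us m)))" "hz m (snd (fst (Us (Suc m))) - snd (fst (Us m)))"
      "hz m (fst (snd (Us (Suc m))) - fst (snd (Us m)))" "hz m (snd (snd (Us (Suc m))) - snd (snd (Us m)))"
      by (simp_all add: hz_mono[of "m+1" _ m])
  qed
  have cp: "hz m (ps (Suc m) - ps m)" "hz m (qs (Suc m) - qs m)" for m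
    using hz_mono[OF incp(1)[of m], of m] hz_mono[OF incp(2)[of m], of m] by simp_all
  obtain L11 where L11: "\<forall>m. hz m (L11 - fst (fst (Us m)))"
    using lim_exists[of "\<lambda>m. fst (fst (Us m))", OF cU(1)] by blast
  obtain L12 where L12: "\<forall>m. hz m (L12 - snd (fst (Us m)))"
    using lim_exists[of "\<lambda>m. snd (fst (Us m))", OF cU(2)] by blast
  obtain L21 where L21: "\<forall>m. hz m (L21 - fst (snd (Us m)))"
    using lim_exists[of "\<lambda>m. fst (snd (Us m))", OF cU(3)] by blast
  obtain L22 where L22: "\<forall>m. hz m (L22 - snd (snd (Us m)))"
    using lim_exists[of "\<lambda>m. snd (snd (Us m))", OF cU(4)] by blast
  obtain Lp where Lp: "\<forall>m. hz m (Lp - ps m)"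
    using lim_exists[of ps, OF cp(1)] by blast
  obtain Lq where Lq: "\<forall>m. hz m (Lq - qs m)"
    using lim_exists[of qs, OF cp(2)] by blast
  define U where "U = ((L11,L12),(L21,L22))"
  have UU: "hzM m (U - Us m)" for m
    unfolding U_def hzM_def hzP_def using L11 L12 L21 L22 by simp
  have hp2: "hz 2 (Lp - XX)" "hz 2 (Lq - YY)"
  proof -
    have "Lp - XX = (Lp - ps 2) + (ps 2 - XX)" "Lq - YY = (Lq - qs 2) + (qs 2 - YY)" by simp_all
    then show "hz 2 (Lp - XX)" "hz 2 (Lq - YY)" using Lp Lq inv[of 2] by (metis hz_add)+
  qed
  have hU: "hzM 1 (U - IM)"
  proof -
    have "U - IM = (U - Us 1) + (Us 1 - IM)" by simp
    then show ?thesis using UU[of 1] inv[of 1] hzM_add by metis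
  qed
  have fin: "hzP m (g - appS U (nf Lp Lq))" for m
  proof -
    have eq: "g - appS U (nf Lp Lq) = (g - appS (Us m) (nf (ps m) (qs m))) - appS (U - Us m) (nf (ps m) (qs m))
        - appS U (nf Lp Lq - nf (ps m) (qs m))"
      by (cases U; cases "Us m"; cases "nf (ps m) (qs m)"; cases "nf Lp Lq") (auto simp: appS_def algebra_simps)
    have 1: "hzP m (g - appS (Us m) (nf (ps m) (qs m)))" using inv[of m] hzP_mono by fastforce
    have 2: "hzP m (appS (U - Us m) (nf (ps m) (qs m)))" by (rule hzP_appM[OF UU hzP_0]) simp
    have "hzP (m+2) (nf Lp Lq - nf (ps m) (qs m))"
      by (rule L) (use hp2 inv[of m] Lp Lq hz1_of_hz2 hz1_of_hz2' in auto)
    then have 3: "hzP m (appS U (nf Lp Lq - nf (ps m) (qs m)))" by (rule hzP_appM[OF hzM_0]) simp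
    show ?thesis unfolding eq by (rule hzP_diff[OF hzP_diff[OF 1 2] 3])
  qed
  have "g = appS U (nf Lp Lq)" by (rule hzP_eq[OF fin])
  then show ?thesis using hU hp2 by blast
qed

lemma cc_numeral: "cc (numeral n) = numeral n"
  by (simp add: cc_def fps_numeral_fps_const)

lemma hz_num_mult: "hz k F \<Longrightarrow> hz k (numeral n * F)"
  using hz_cc_mult[of k F "numeral n"] by (simp add: cc_numeral)

definition cub :: "'a::field \<Rightarrow> 'a \<Rightarrow> 'a \<Rightarrow> 'a \<Rightarrow> 'a S \<Rightarrow> 'a S \<Rightarrow> 'a S" where
  "cub c0 c1 c2 c3 p q = cc c0 * p^3 + cc c1 * (p^2*q) + cc c2 * (p*q^2) + cc c3 * q^3"
definition dXc :: "'a::field \<Rightarrow> 'a \<Rightarrow> 'a \<Rightarrow> 'a \<Rightarrow> 'a S" where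
  "dXc c0 c1 c2 c3 = cc c0 * (3*XX^2) + cc c1 * (2*XX*YY) + cc c2 * YY^2"
definition dYc :: "'a::field \<Rightarrow> 'a \<Rightarrow> 'a \<Rightarrow> 'a \<Rightarrow> 'a S" where
  "dYc c0 c1 c2 c3 = cc c1 * XX^2 + cc c2 * (2*XX*YY) + cc c3 * (3*YY^2)"

lemma hzm: "hz a F \<Longrightarrow> hz b G \<Longrightarrow> k \<le> a + b \<Longrightarrow> hz k (F*G)" by (rule hz_mult')

lemma taylor_mons:
  assumes k: "4 \<le> k" and p: "hz 2 (p - XX)" and q: "hz 2 (q - YY)"
    and dp: "hz (k-2) dp" and dq: "hz (k-2) dq"
  shows "hz (k+1) ((p+dp)^3 - p^3 - dp*(3*XX^2))"
    and "hz (k+1) ((p+dp)^2*(q+dq) - p^2*q - (dp*(2*XX*YY) + dq*XX^2))"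
    and "hz (k+1) ((p+dp)*(q+dq)^2 - p*q^2 - (dp*YY^2 + dq*(2*XX*YY)))"
    and "hz (k+1) ((q+dq)^3 - q^3 - dq*(3*YY^2))"
proof -
  have p1: "hz 1 p" and q1: "hz 1 q" using hz1_of_hz2 hz1_of_hz2' p q by auto
  have pX: "hz 1 (p+XX)" and qY: "hz 1 (q+YY)" using hz_add p1 q1 by auto
  have pq: "hz 3 (p*q - XX*YY)"
  proof -
    have e: "p*q - XX*YY = (p - XX)*q + XX*(q - YY)" by (simp add: algebra_simps)
    show ?thesis unfolding e by (rule hz_add; rule hzm) (use p q q1 in auto)
  qed
  have pp: "hz 3 (p^2 - XX^2)"
  proof -
    have e: "p^2 - XX^2 = (p+XX)*(p-XX)" by (simp add: algebra_simps power2_eq_square)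
    show ?thesis unfolding e by (rule hzm[OF pX p]) simp
  qed
  have qq: "hz 3 (q^2 - YY^2)"
  proof -
    have e: "q^2 - YY^2 = (q+YY)*(q-YY)" by (simp add: algebra_simps power2_eq_square)
    show ?thesis unfolding e by (rule hzm[OF qY q]) simp
  qed
  have dd: "hz ((k-2)+(k-2)) (dp*dp)" "hz ((k-2)+(k-2)) (dp*dq)" "hz ((k-2)+(k-2)) (dq*dq)"
    using hz_mult[OF dp dp] hz_mult[OF dp dq] hz_mult[OF dq dq] by auto
  have ddd: "hz (k+1) (F*(dp*dp))" "hz (k+1) (F*(dp*dq))" "hz (k+1) (F*(dq*dq))" if F: "hz 1 F" for F
    using hzm[OF F dd(1), of "k+1"] hzm[OF F dd(2), of "k+1"] hzm[OF F dd(3), of "k+1"] k by auto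
  have lin: "hz (k+1) (A*dp)" "hz (k+1) (A*dq)" if A: "hz 3 A" for A
    using hzm[OF A dp, of "k+1"] hzm[OF A dq, of "k+1"] k by auto
  have dp1: "hz 1 dp" "hz 1 dq" using hz_mono[OF dp, of 1] hz_mono[OF dq, of 1] k by auto
  show "hz (k+1) ((p+dp)^3 - p^3 - dp*(3*XX^2))"
  proof -
    have e: "(p+dp)^3 - p^3 - dp*(3*XX^2) = 3*(p^2 - XX^2)*dp + (3*p)*(dp*dp) + dp*(dp*dp)"
      by (simp add: algebra_simps power2_eq_square power3_eq_cube)
    show ?thesis unfolding e by (intro hz_add lin ddd hz_num_mult pp p1 dp1)
  qed
  show "hz (k+1) ((q+dq)^3 - q^3 - dq*(3*YY^2))"
  proof -
    have e: "(q+dq)^3 - q^3 - dq*(3*YY^2) = 3*(q^2 - YY^2)*dq + (3*q)*(dq*dq) + dq*(dq*dq)"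
      by (simp add: algebra_simps power2_eq_square power3_eq_cube)
    show ?thesis unfolding e by (intro hz_add lin ddd hz_num_mult qq q1 dp1)
  qed
  show "hz (k+1) ((p+dp)^2*(q+dq) - p^2*q - (dp*(2*XX*YY) + dq*XX^2))"
  proof -
    have e: "(p+dp)^2*(q+dq) - p^2*q - (dp*(2*XX*YY) + dq*XX^2)
       = (p^2 - XX^2)*dq + 2*(p*q - XX*YY)*dp + (2*p)*(dp*dq) + q*(dp*dp) + dq*(dp*dp)"
      by (simp add: algebra_simps power2_eq_square power3_eq_cube)
    show ?thesis unfolding e by (intro hz_add lin ddd hz_num_mult pp pq p1 q1 dp1)
  qed
  show "hz (k+1) ((p+dp)*(q+dq)^2 - p*q^2 - (dp*YY^2 + dq*(2*XX*YY)))"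
  proof -
    have e: "(p+dp)*(q+dq)^2 - p*q^2 - (dp*YY^2 + dq*(2*XX*YY))
       = (q^2 - YY^2)*dp + 2*(p*q - XX*YY)*dq + (2*q)*(dp*dq) + p*(dq*dq) + dp*(dq*dq)"
      by (simp add: algebra_simps power2_eq_square power3_eq_cube)
    show ?thesis unfolding e by (intro hz_add lin ddd hz_num_mult qq pq p1 q1 dp1)
  qed
qed

lemma taylor_cub:
  assumes k: "4 \<le> k" and p: "hz 2 (p - XX)" and q: "hz 2 (q - YY)"
    and dp: "hz (k-2) dp" and dq: "hz (k-2) dq"
  shows "hz (k+1) (cub c0 c1 c2 c3 (p+dp) (q+dq) - cub c0 c1 c2 c3 p q - (dp * dXc c0 c1 c2 c3 + dq * dYc c0 c1 c2 c3))"
proof -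
  note t = taylor_mons[OF k p q dp dq]
  have e: "cub c0 c1 c2 c3 (p+dp) (q+dq) - cub c0 c1 c2 c3 p q - (dp * dXc c0 c1 c2 c3 + dq * dYc c0 c1 c2 c3)
    = cc c0 * ((p+dp)^3 - p^3 - dp*(3*XX^2)) + cc c1 * ((p+dp)^2*(q+dq) - p^2*q - (dp*(2*XX*YY) + dq*XX^2))
      + cc c2 * ((p+dp)*(q+dq)^2 - p*q^2 - (dp*YY^2 + dq*(2*XX*YY))) + cc c3 * ((q+dq)^3 - q^3 - dq*(3*YY^2))"
    by (simp add: cub_def dXc_def dYc_def algebra_simps)
  show ?thesis unfolding e by (intro hz_add hz_cc_mult t)
qed

lemma lip_cub:
  assumes p: "hz 1 p" and q: "hz 1 q" and p': "hz 1 p'" and q': "hz 1 q'"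
    and dp: "hz j (p - p')" and dq: "hz j (q - q')"
  shows "hz (j+2) (cub c0 c1 c2 c3 p q - cub c0 c1 c2 c3 p' q')"
proof -
  have h2: "hz 2 (A*B)" if "hz 1 A" "hz 1 B" for A B by (rule hzm[OF that]) simp
  have m1: "hz (j+2) ((p - p')*A)" "hz (j+2) ((q - q')*A)" if A: "hz 2 A" for A
    using hzm[OF dp A, of "j+2"] hzm[OF dq A, of "j+2"] by auto
  have e: "cub c0 c1 c2 c3 p q - cub c0 c1 c2 c3 p' q' =
     cc c0 * ((p - p')*(p*p + p*p' + p'*p')) + cc c1 * ((p - p')*((p+p')*q) + (q - q')*(p'*p'))
     + cc c2 * ((p - p')*(q*q) + (q - q')*(p'*(q+q'))) + cc c3 * ((q - q')*(q*q + q*q' + q'*q'))"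
    by (simp add: cub_def algebra_simps power2_eq_square power3_eq_cube)
  show ?thesis unfolding e
    by (intro hz_add hz_cc_mult m1 h2) (use p q p' q' in auto)
qed

lemma sub_pow: "hz 1 p \<Longrightarrow> hz 1 q \<Longrightarrow> sub p q (F^n) = sub p q F ^ n"
  by (induct n) (simp_all add: sub_mult sub_cc[of p q 1, simplified])

lemma sub_cub:
  assumes p: "hz 1 p" and q: "hz 1 q"
  shows "sub p q (cub c0 c1 c2 c3 XX YY) = cub c0 c1 c2 c3 p q"
  by (simp add: cub_def sub_add sub_mult[OF p q] sub_pow[OF p q] sub_cc sub_X[OF p] sub_Y[OF q])

definition mon :: "nat \<Rightarrow> nat \<Rightarrow> 'a::field S" where "mon i j = XX^i * YY^j"

lemma mon_mult: "mon a b * mon c d = mon (a+c) (b+d)"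
  by (simp add: mon_def power_add algebra_simps)
lemma hz_lmult: "hz k F \<Longrightarrow> hz k (s*F)" using hz_mult'[of 0 s k F k] by simp

lemma hz_mon: "i + j \<ge> k \<Longrightarrow> hz k (mon i j)"
  using hz_XY[of i j] hz_mono by (auto simp: mon_def)

definition Tan :: "'a::field S \<times> 'a S \<Rightarrow> 'a S \<times> 'a S \<Rightarrow> 'a S \<times> 'a S \<Rightarrow> nat \<Rightarrow> 'a S \<times> 'a S \<Rightarrow> bool" where
  "Tan N d1 d2 k t \<longleftrightarrow> (\<exists>W dp dq. hzM (k-3) W \<and> hz (k-2) dp \<and> hz (k-2) dq \<and> t = appS W N + psc dp d1 + psc dq d2)"
definition good :: "'a::field S \<times> 'a S \<Rightarrow> 'a S \<times> 'a S \<Rightarrow> 'a S \<times> 'a S \<Rightarrow> nat \<Rightarrow> 'a S \<times> 'a S \<Rightarrow> bool" where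
  "good N d1 d2 k r \<longleftrightarrow> (\<exists>t. Tan N d1 d2 k t \<and> hzP (k+1) (r - t))"

lemma Tan_zero: "Tan N d1 d2 k 0"
  unfolding Tan_def by (rule exI[of _ 0], rule exI[of _ 0], rule exI[of _ 0])
    (simp add: appS_def psc_def hzM_def hzP_def zero_prod_def)

lemma Tan_add: assumes "Tan N d1 d2 k t" "Tan N d1 d2 k t'" shows "Tan N d1 d2 k (t + t')"
proof -
  obtain W dp dq where A: "hzM (k-3) W" "hz (k-2) dp" "hz (k-2) dq" "t = appS W N + psc dp d1 + psc dq d2"
    using assms(1) by (auto simp: Tan_def)
  obtain W' dp' dq' where B: "hzM (k-3) W'" "hz (k-2) dp'" "hz (k-2) dq'" "t' = appS W' N + psc dp' d1 + psc dq' d2"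
    using assms(2) by (auto simp: Tan_def)
  have "t + t' = appS (W + W') N + psc (dp+dp') d1 + psc (dq+dq') d2"
    unfolding A(4) B(4) by (cases W; cases W') (auto simp: appS_def psc_def algebra_simps)
  moreover have "hzM (k-3) (W + W')" using A(1) B(1) by (auto simp: hzM_def hzP_def intro: hz_add)
  ultimately show ?thesis unfolding Tan_def using A B by (blast intro: hz_add)
qed

lemma Tan_psc: assumes "Tan N d1 d2 k t" shows "Tan N d1 d2 k (psc s t)"
proof -
  obtain W dp dq where A: "hzM (k-3) W" "hz (k-2) dp" "hz (k-2) dq" "t = appS W N + psc dp d1 + psc dq d2"
    using assms(1) by (auto simp: Tan_def)
  have "psc s t = appS (mapM ((*) s) W) N + psc (s*dp) d1 + psc (s*dq) d2"
    unfolding A(4) by (cases W) (auto simp: appS_def psc_def mapM_def algebra_simps)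
  moreover have "hzM (k-3) (mapM ((*) s) W)" using A(1)
    by (cases W) (auto simp: hzM_def hzP_def mapM_def intro: hz_lmult)
  moreover have "hz (k-2) (s*dp)" "hz (k-2) (s*dq)" using A(2,3) by (auto intro: hz_lmult)
  ultimately show ?thesis unfolding Tan_def by blast
qed

lemma good_Tan: "Tan N d1 d2 k t \<Longrightarrow> good N d1 d2 k t"
  unfolding good_def by (rule exI[of _ t]) (simp add: hzP_def zero_prod_def)

lemma good_add: assumes "good N d1 d2 k r" "good N d1 d2 k r'" shows "good N d1 d2 k (r + r')"
proof -
  obtain t t' where "Tan N d1 d2 k t" "hzP (k+1) (r - t)" "Tan N d1 d2 k t'" "hzP (k+1) (r' - t')"
    using assms by (auto simp: good_def)
  moreover have "r + r' - (t + t') = (r - t) + (r' - t')" by (simp add: algebra_simps)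
  ultimately show ?thesis unfolding good_def by (metis Tan_add hzP_add)
qed

lemma psc_diff: "psc s (r - t) = psc s r - psc s t"
  by (simp add: psc_def algebra_simps)

lemma good_psc: assumes "good N d1 d2 k r" shows "good N d1 d2 k (psc s r)"
proof -
  obtain t where t: "Tan N d1 d2 k t" "hzP (k+1) (r - t)" using assms by (auto simp: good_def)
  have "hzP (k+1) (psc s r - psc s t)" unfolding psc_diff[symmetric]
    by (rule hzP_psc[OF hz_0 t(2)]) simp
  then show ?thesis unfolding good_def using Tan_psc[OF t(1)] by blast
qed

lemma psc_m1: "psc (-1) r = - r" by (cases r) (simp add: psc_def)

lemma good_uminus: "good N d1 d2 k r \<Longrightarrow> good N d1 d2 k (- r)"
  using good_psc[of N d1 d2 k r "-1"] by (simp add: psc_m1)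

lemma good_diff: "good N d1 d2 k r \<Longrightarrow> good N d1 d2 k r' \<Longrightarrow> good N d1 d2 k (r - r')"
proof -
  assume a: "good N d1 d2 k r" "good N d1 d2 k r'"
  have "r - r' = r + (- r')" by simp
  then show ?thesis using good_add[OF a(1) good_uminus[OF a(2)]] by simp
qed

lemma good_zero: "good N d1 d2 k 0" by (rule good_Tan[OF Tan_zero])

lemma good_sum: "(\<And>x. x \<in> A \<Longrightarrow> good N d1 d2 k (f x)) \<Longrightarrow> good N d1 d2 k (sum f A)"
  by (induct A rule: infinite_finite_induct) (auto simp: good_zero intro: good_add)

lemma hom_expand:
  assumes "hz k F"
  shows "hz (k+1) (F - (\<Sum>i\<le>k. cc (co F i (k-i)) * mon i (k-i)))"
  unfolding hz_def
proof (intro allI impI)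
  fix a b assume ab: "a + b < k + 1"
  have "co (\<Sum>i\<le>k. cc (co F i (k-i)) * mon i (k-i)) a b = (\<Sum>i\<le>k. co F i (k-i) * (if a = i \<and> b = k - i then 1 else 0))"
    by (simp add: co_sum mon_def co_XY)
  also have "\<dots> = (if a \<in> {..k} then co F a (k-a) * (if a = a \<and> b = k - a then 1 else 0) else 0)"
    by (rule sum_single) auto
  also have "\<dots> = co F a b" using assms ab by (auto simp: hz_def)
  finally show "co (F - (\<Sum>i\<le>k. cc (co F i (k-i)) * mon i (k-i))) a b = 0" by simp
qed

lemma good_mod: "good N d1 d2 k r' \<Longrightarrow> hzP (k+1) (r - r') \<Longrightarrow> good N d1 d2 k r"
proof -
  assume g: "good N d1 d2 k r'" and h: "hzP (k+1) (r - r')"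
  obtain t where t: "Tan N d1 d2 k t" "hzP (k+1) (r' - t)" using g by (auto simp: good_def)
  have "r - t = (r - r') + (r' - t)" by simp
  then have "hzP (k+1) (r - t)" using hzP_add[OF h t(2)] by simp
  then show ?thesis unfolding good_def using t(1) by blast
qed

lemma good_from_monos:
  assumes m1: "\<And>i j. i + j = k \<Longrightarrow> good N d1 d2 k (mon i j, 0)"
    and m2: "\<And>i j. i + j = k \<Longrightarrow> good N d1 d2 k (0, mon i j)"
    and r: "hzP k r"
  shows "good N d1 d2 k r"
proof -
  obtain r1 r2 where rr: "r = (r1, r2)" by (cases r)
  have h1: "hz k r1" "hz k r2" using r rr by (auto simp: hzP_def)
  define s1 where "s1 = (\<Sum>i\<le>k. psc (cc (co r1 i (k-i))) (mon i (k-i), 0))"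
  define s2 where "s2 = (\<Sum>i\<le>k. psc (cc (co r2 i (k-i))) (0, mon i (k-i)))"
  have g: "good N d1 d2 k (s1 + s2)"
    unfolding s1_def s2_def by (intro good_add good_sum good_psc m1 m2) auto
  have e: "s1 + s2 = ((\<Sum>i\<le>k. cc (co r1 i (k-i)) * mon i (k-i)), (\<Sum>i\<le>k. cc (co r2 i (k-i)) * mon i (k-i)))"
    by (simp add: s1_def s2_def psc_def sum_prod)
  have "hzP (k+1) (r - (s1 + s2))" unfolding e rr hzP_def using hom_expand[OF h1(1)] hom_expand[OF h1(2)] by simp
  then show ?thesis by (rule good_mod[OF g])
qed

lemma GL_close: assumes "hzM 1 (U - IM)" shows "GLS U"
proof -
  obtain a b c d where U: "U = ((a,b),(c,d))" by (cases U) auto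
  have "co a 0 0 = 1" "co b 0 0 = 0" "co c 0 0 = 0" "co d 0 0 = 1"
    using assms by (auto simp: U IM_def hzM_def hzP_def hz1_iff' co_one)
  then have "co (detS U) 0 0 = 1" by (simp add: U detS_def co_mult)
  then show ?thesis by (simp add: GLS_def unitS_iff)
qed

definition nfc :: "'a::field \<times> 'a \<times> 'a \<times> 'a \<Rightarrow> 'a \<times> 'a \<times> 'a \<times> 'a \<Rightarrow> 'a S \<Rightarrow> 'a S \<Rightarrow> 'a S \<times> 'a S" where
  "nfc a b p q = (case a of (a0,a1,a2,a3) \<Rightarrow> cub a0 a1 a2 a3 p q, case b of (b0,b1,b2,b3) \<Rightarrow> cub b0 b1 b2 b3 p q)"
definition d1c :: "'a::field \<times> 'a \<times> 'a \<times> 'a \<Rightarrow> 'a \<times> 'a \<times> 'a \<times> 'a \<Rightarrow> 'a S \<times> 'a S" where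
  "d1c a b = (case a of (a0,a1,a2,a3) \<Rightarrow> dXc a0 a1 a2 a3, case b of (b0,b1,b2,b3) \<Rightarrow> dXc b0 b1 b2 b3)"
definition d2c :: "'a::field \<times> 'a \<times> 'a \<times> 'a \<Rightarrow> 'a \<times> 'a \<times> 'a \<times> 'a \<Rightarrow> 'a S \<times> 'a S" where
  "d2c a b = (case a of (a0,a1,a2,a3) \<Rightarrow> dYc a0 a1 a2 a3, case b of (b0,b1,b2,b3) \<Rightarrow> dYc b0 b1 b2 b3)"

lemma hz_dXc: "hz 2 (dXc c0 c1 c2 c3)" "hz 2 (dYc c0 c1 c2 c3)"
  unfolding dXc_def dYc_def power2_eq_square
  by (intro hz_add hz_cc_mult hz_num_mult hzm[OF hz_X hz_X] hzm[OF hz_X hz_Y] hzm[OF hz_Y hz_Y]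
      hzm[OF hz_num_mult[OF hz_X] hz_Y]; simp)+

lemma key_cub:
  assumes Sol: "\<And>k r. 4 \<le> k \<Longrightarrow> hzP k r \<Longrightarrow> good (nfc a b XX YY) (d1c a b) (d2c a b) k r"
    and g: "hzP 4 (g - nfc a b XX YY)"
  shows "ceq (nfc a b XX YY) g"
proof -
  obtain a0 a1 a2 a3 where a: "a = (a0,a1,a2,a3)" by (cases a) auto
  obtain b0 b1 b2 b3 where b: "b = (b0,b1,b2,b3)" by (cases b) auto
  have "\<exists>U p q. hzM 1 (U - IM) \<and> hz 2 (p - XX) \<and> hz 2 (q - YY) \<and> g = appS U (nfc a b p q)"
  proof (rule main_iter[where da = "d1c a b" and db = "d2c a b"])
    fix k :: nat and p q dp dq :: "'a S"
    assume "4 \<le> k" "hz 2 (p - XX)" "hz 2 (q - YY)" "hz (k-2) dp" "hz (k-2) dq"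
    note t = taylor_cub[OF this]
    show "hzP (k+1) (nfc a b (p+dp) (q+dq) - nfc a b p q - (psc dp (d1c a b) + psc dq (d2c a b)))"
      using t[of a0 a1 a2 a3] t[of b0 b1 b2 b3]
      by (simp add: hzP_def nfc_def d1c_def d2c_def psc_def a b algebra_simps)
  next
    fix j :: nat and p q p' q' :: "'a S"
    assume "hz 1 p" "hz 1 q" "hz 1 p'" "hz 1 q'" "hz j (p - p')" "hz j (q - q')"
    note l = lip_cub[OF this]
    show "hzP (j+2) (nfc a b p q - nfc a b p' q')"
      using l[of a0 a1 a2 a3] l[of b0 b1 b2 b3] by (simp add: hzP_def nfc_def a b)
  next
    show "hzP 2 (d1c a b)" "hzP 2 (d2c a b)" by (simp_all add: hzP_def d1c_def d2c_def a b hz_dXc)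
  next
    fix k :: nat and r :: "'a S \<times> 'a S" assume "4 \<le> k" "hzP k r"
    then have "good (nfc a b XX YY) (d1c a b) (d2c a b) k r" by (rule Sol)
    then show "\<exists>W dp dq. hzM (k-3) W \<and> hz (k-2) dp \<and> hz (k-2) dq \<and>
        hzP (k+1) (r - (appS W (nfc a b XX YY) + psc dp (d1c a b) + psc dq (d2c a b)))"
      unfolding good_def Tan_def by blast
  next
    show "hzP 4 (g - nfc a b XX YY)" by (rule g)
  qed
  then obtain U p q where U: "hzM 1 (U - IM)" and p: "hz 2 (p - XX)" and q: "hz 2 (q - YY)"
    and gU: "g = appS U (nfc a b p q)" by blast
  have "mapP (sub p q) (nfc a b XX YY) = nfc a b p q"
    using sub_cub[OF hz1_of_hz2[OF p] hz1_of_hz2'[OF q]] by (simp add: mapP_def nfc_def a b)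
  then have "g = appS U (mapP (sub p q) (nfc a b XX YY))" using gU by simp
  then show ?thesis unfolding ceq_def using GL_close[OF U] aut_sub[OF p q] by blast
qed

lemma mon_eq: "a + c = i \<Longrightarrow> b + d = j \<Longrightarrow> mon a b * mon c d = mon i j"
  by (simp add: mon_mult)

lemma Tw11: "hz (k-3) w \<Longrightarrow> good N d1 d2 k (w * fst N, 0)"
  by (rule good_Tan, unfold Tan_def, rule exI[of _ "((w,0),(0,0))"], rule exI[of _ 0], rule exI[of _ 0])
     (simp add: hzM_def hzP_def appS_def psc_def)
lemma Tw12: "hz (k-3) w \<Longrightarrow> good N d1 d2 k (w * snd N, 0)"
  by (rule good_Tan, unfold Tan_def, rule exI[of _ "((0,w),(0,0))"], rule exI[of _ 0], rule exI[of _ 0])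
     (simp add: hzM_def hzP_def appS_def psc_def)
lemma Tw21: "hz (k-3) w \<Longrightarrow> good N d1 d2 k (0, w * fst N)"
  by (rule good_Tan, unfold Tan_def, rule exI[of _ "((0,0),(w,0))"], rule exI[of _ 0], rule exI[of _ 0])
     (simp add: hzM_def hzP_def appS_def psc_def)
lemma Tw22: "hz (k-3) w \<Longrightarrow> good N d1 d2 k (0, w * snd N)"
  by (rule good_Tan, unfold Tan_def, rule exI[of _ "((0,0),(0,w))"], rule exI[of _ 0], rule exI[of _ 0])
     (simp add: hzM_def hzP_def appS_def psc_def)
lemma Tp: "hz (k-2) s \<Longrightarrow> good N d1 d2 k (s * fst d1, s * snd d1)"
  by (rule good_Tan, unfold Tan_def, rule exI[of _ 0], rule exI[of _ s], rule exI[of _ 0])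
     (simp add: hzM_def hzP_def appS_def psc_def zero_prod_def)
lemma Tq: "hz (k-2) s \<Longrightarrow> good N d1 d2 k (s * fst d2, s * snd d2)"
  by (rule good_Tan, unfold Tan_def, rule exI[of _ 0], rule exI[of _ 0], rule exI[of _ s])
     (simp add: hzM_def hzP_def appS_def psc_def zero_prod_def)

lemma mon_cong: "a = c \<Longrightarrow> b = d \<Longrightarrow> mon a b = mon c d" by simp

lemma good_eq: "good N d1 d2 k r \<Longrightarrow> r = r' \<Longrightarrow> good N d1 d2 k r'" by simp

lemma S_two: "(2::'a::field) = 0 \<Longrightarrow> (2::'a S) = 0"
  using cc_numeral[of "num.Bit0 num.One", where 'a='a] by simp
lemma S_three: "(2::'a::field) = 0 \<Longrightarrow> (3::'a S) = 1"
proof -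
  assume "(2::'a) = 0"
  then have "(2::'a S) = 0" by (rule S_two)
  moreover have "(3::'a S) = 2 + 1" by simp
  ultimately show ?thesis by simp
qed

lemma case2_sol:
  fixes N d1 d2 :: "'a::field S \<times> 'a S"
  assumes N: "N = (mon 3 0, mon 0 3)" and d1: "d1 = (mon 2 0, 0)" and d2: "d2 = (0, mon 0 2)"
    and k: "4 \<le> k" and r: "hzP k r"
  shows "good N d1 d2 k r"
proof (rule good_from_monos[OF _ _ r])
  fix i j assume ij: "i + j = k"
  show "good N d1 d2 k (mon i j, 0)"
  proof (cases "2 \<le> i")
    case True
    have "good N d1 d2 k (mon (i-2) j * fst d1, mon (i-2) j * snd d1)"
      by (rule Tp, rule hz_mon) (use ij True in simp)
    then show ?thesis by (rule good_eq) (use True in \<open>auto simp: d1 mon_mult intro!: mon_cong\<close>)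
  next
    case False
    have "good N d1 d2 k (mon i (j-3) * snd N, 0)"
      by (rule Tw12, rule hz_mon) (use ij False in simp)
    then show ?thesis by (rule good_eq) (use ij False k in \<open>auto simp: N mon_mult intro!: mon_cong\<close>)
  qed
next
  fix i j assume ij: "i + j = k"
  show "good N d1 d2 k (0, mon i j)"
  proof (cases "2 \<le> j")
    case True
    have "good N d1 d2 k (mon i (j-2) * fst d2, mon i (j-2) * snd d2)"
      by (rule Tq, rule hz_mon) (use ij True in simp)
    then show ?thesis by (rule good_eq) (use True in \<open>auto simp: d2 mon_mult intro!: mon_cong\<close>)
  next
    case False
    have "good N d1 d2 k (0, mon (i-3) j * fst N)"
      by (rule Tw21, rule hz_mon) (use ij False in simp)
    then show ?thesis by (rule good_eq) (use ij False k in \<open>auto simp: N mon_mult intro!: mon_cong\<close>)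
  qed
qed

lemma case1_sol:
  fixes N d1 d2 :: "'a::field S \<times> 'a S"
  assumes N: "N = (mon 3 0, mon 0 3 + mon 2 1)" and d1: "d1 = (mon 2 0, 0)" and d2: "d2 = (0, mon 2 0 + mon 0 2)"
    and k: "4 \<le> k" and r: "hzP k r"
  shows "good N d1 d2 k r"
proof (rule good_from_monos[OF _ _ r])
  fix i j assume ij: "i + j = k"
  show "good N d1 d2 k (mon i j, 0)"
  proof (cases "2 \<le> i")
    case True
    have "good N d1 d2 k (mon (i-2) j * fst d1, mon (i-2) j * snd d1)"
      by (rule Tp, rule hz_mon) (use ij True in simp)
    then show ?thesis by (rule good_eq) (use True in \<open>auto simp: d1 mon_mult intro!: mon_cong\<close>)
  next
    case False
    have "3 \<le> j" using ij k False by linarith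
    then obtain j' where j: "j = j' + 3" using le_Suc_ex by (metis add.commute)
    have a: "good N d1 d2 k (mon i j' * snd N, 0)"
      by (rule Tw12, rule hz_mon) (use ij j in simp)
    have b: "good N d1 d2 k (mon i (j'+1) * fst d1, mon i (j'+1) * snd d1)"
      by (rule Tp, rule hz_mon) (use ij j in simp)
    have "good N d1 d2 k ((mon i j' * snd N, 0) - (mon i (j'+1) * fst d1, mon i (j'+1) * snd d1))"
      by (rule good_diff[OF a b])
    then show ?thesis by (rule good_eq) (simp add: N d1 j mon_mult algebra_simps)
  qed
next
  have main: "\<forall>i. i + j = k \<longrightarrow> good N d1 d2 k (0, mon i j)" for j
  proof (induct j rule: less_induct)
    case (less j)
    show ?case
    proof (intro allI impI)
      fix i assume ij: "i + j = k"
      show "good N d1 d2 k (0, mon i j)"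
      proof (cases "2 \<le> j")
        case True
        then obtain j' where j: "j = j' + 2" by (metis add.commute le_Suc_ex)
        have a: "good N d1 d2 k (mon i j' * fst d2, mon i j' * snd d2)"
          by (rule Tq, rule hz_mon) (use ij j in simp)
        have b: "good N d1 d2 k (0, mon (i+2) j')" using less[of j'] ij j by simp
        have "good N d1 d2 k ((mon i j' * fst d2, mon i j' * snd d2) - (0, mon (i+2) j'))"
          by (rule good_diff[OF a b])
        then show ?thesis by (rule good_eq) (simp add: d2 j mon_mult algebra_simps)
      next
        case False
        have "3 \<le> i" using ij k False by linarith
        then obtain i' where i: "i = i' + 3" using le_Suc_ex by (metis add.commute)
        have "good N d1 d2 k (0, mon i' j * fst N)"
          by (rule Tw21, rule hz_mon) (use ij i False in simp)
        then show ?thesis by (rule good_eq) (simp add: N i mon_mult algebra_simps)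
      qed
    qed
  qed
  fix i j assume "i + j = k"
  then show "good N d1 d2 k (0, mon i j)" using main by blast
qed

lemma case3_sol:
  fixes N d1 d2 :: "'a::field S \<times> 'a S"
  assumes N: "N = (mon 3 0 + mon 2 1, cc lam * mon 2 1 + mon 0 3)" and d1: "d1 = (mon 2 0, 0)"
    and d2: "d2 = (mon 2 0, cc lam * mon 2 0 + mon 0 2)"
    and lam: "lam \<noteq> 1" and char2: "(2::'a) = 0"
    and k: "4 \<le> k" and r: "hzP k r"
  shows "good N d1 d2 k r"
proof -
  have F3: "good N d1 d2 k (mon i j, 0)" if ij: "i + j = k" for i j
  proof (cases "2 \<le> i")
    case True
    have "good N d1 d2 k (mon (i-2) j * fst d1, mon (i-2) j * snd d1)"
      by (rule Tp, rule hz_mon) (use ij True in simp)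
    then show ?thesis by (rule good_eq) (use True in \<open>auto simp: d1 mon_mult intro!: mon_cong\<close>)
  next
    case False
    have "3 \<le> j" using ij k False by linarith
    then obtain j' where j: "j = j' + 3" using le_Suc_ex by (metis add.commute)
    have a: "good N d1 d2 k (mon i j' * snd N, 0)"
      by (rule Tw12, rule hz_mon) (use ij j in simp)
    have b: "good N d1 d2 k (psc (cc lam) (mon i (j'+1) * fst d1, mon i (j'+1) * snd d1))"
      by (rule good_psc, rule Tp, rule hz_mon) (use ij j in simp)
    have "good N d1 d2 k ((mon i j' * snd N, 0) - psc (cc lam) (mon i (j'+1) * fst d1, mon i (j'+1) * snd d1))"
      by (rule good_diff[OF a b])
    then show ?thesis by (rule good_eq) (simp add: N d1 j psc_def mon_mult algebra_simps; (rule mon_cong)?; simp)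
  qed
  obtain m where m: "k = m + 4" using k le_Suc_ex by (metis add.commute)
  have A: "good N d1 d2 k (0, mon (m+1) 0 * fst N)" by (rule Tw21, rule hz_mon) (simp add: m)
  have B: "good N d1 d2 k (0, mon m 1 * fst N)" by (rule Tw21, rule hz_mon) (simp add: m)
  have C: "good N d1 d2 k (mon (m+2) 0 * fst d2, mon (m+2) 0 * snd d2)" by (rule Tq, rule hz_mon) (simp add: m)
  have D: "good N d1 d2 k (mon (m+4) 0, 0)" by (rule F3) (simp add: m)
  have "good N d1 d2 k ((0, mon (m+1) 0 * fst N) - ((0, mon m 1 * fst N) - (mon (m+2) 0 * fst d2, mon (m+2) 0 * snd d2) + (mon (m+4) 0, 0)))"
    by (rule good_diff[OF A good_add[OF good_diff[OF B C] D]])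
  then have E: "good N d1 d2 k (0, (1 + cc lam) * mon (m+4) 0)"
    by (rule good_eq) (simp add: N d2 mon_mult algebra_simps numeral_eq_Suc add_Suc_right)
  have nz: "1 + lam \<noteq> 0"
  proof
    assume h: "1 + lam = 0"
    have "lam = - 1" using h by (simp add: eq_neg_iff_add_eq_0 add.commute)
    also have "- 1 = (1::'a)" using char2 by (metis add_eq_0_iff one_add_one)
    finally show False using lam by simp
  qed
  have v1: "good N d1 d2 k (0, mon (m+4) 0)"
  proof -
    have "good N d1 d2 k (psc (cc (inverse (1 + lam))) (0, (1 + cc lam) * mon (m+4) 0))" by (rule good_psc[OF E])
    moreover have "cc (inverse (1 + lam)) * ((1 + cc lam) * mon (m+4) 0) = (mon (m+4) 0 :: 'a S)"
    proof -
      have "cc (inverse (1 + lam)) * (1 + cc lam) = (cc (inverse (1 + lam) * (1 + lam)) :: 'a S)"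
        by (simp add: cc_mult cc_add)
      also have "\<dots> = 1" using nz by simp
      finally show ?thesis by (simp add: mult.assoc[symmetric])
    qed
    ultimately show ?thesis by (simp add: psc_def)
  qed
  have v2: "good N d1 d2 k (0, mon (m+3) 1)"
  proof -
    have "good N d1 d2 k ((0, mon (m+1) 0 * fst N) - (0, mon (m+4) 0))" by (rule good_diff[OF A v1])
    then show ?thesis by (rule good_eq) (simp add: N mon_mult algebra_simps; (rule mon_cong)?; simp)
  qed
  have main: "\<forall>i. i + j = k \<longrightarrow> good N d1 d2 k (0, mon i j)" for j
  proof (induct j rule: less_induct)
    case (less j)
    show ?case
    proof (intro allI impI)
      fix i assume ij: "i + j = k"
      show "good N d1 d2 k (0, mon i j)"
      proof (cases "2 \<le> j")
        case True
        then obtain j' where j: "j = j' + 2" by (metis add.commute le_Suc_ex)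
        have a: "good N d1 d2 k (mon i j' * fst d2, mon i j' * snd d2)"
          by (rule Tq, rule hz_mon) (use ij j in simp)
        have b0: "good N d1 d2 k (0, mon (i+2) j')" using less[of j'] ij j by simp
        have b: "good N d1 d2 k (psc (cc lam) (0, mon (i+2) j'))" by (rule good_psc[OF b0])
        have c: "good N d1 d2 k (mon (i+2) j', 0)" by (rule F3) (use ij j in simp)
        have "good N d1 d2 k ((mon i j' * fst d2, mon i j' * snd d2) - psc (cc lam) (0, mon (i+2) j') - (mon (i+2) j', 0))"
          by (rule good_diff[OF good_diff[OF a b] c])
        then show ?thesis by (rule good_eq) (simp add: d2 j psc_def mon_mult algebra_simps; (rule mon_cong)?; simp)
      next
        case False
        then have "j = 0 \<or> j = 1" by auto
        then show ?thesis
        proof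
          assume "j = 0" then have "i = m + 4" using ij m by simp
          then show ?thesis using v1 \<open>j = 0\<close> by simp
        next
          assume "j = 1" then have "i = m + 3" using ij m by simp
          then show ?thesis using v2 \<open>j = 1\<close> by simp
        qed
      qed
    qed
  qed
  show ?thesis
    by (rule good_from_monos[OF F3 _ r]) (use main in blast)+
qed

lemma case4_sol:
  fixes N d1 d2 :: "'a::field S \<times> 'a S"
  assumes N: "N = (mon 2 1, mon 3 0 + mon 0 3)" and d1: "d1 = (0, mon 2 0)" and d2: "d2 = (mon 2 0, mon 0 2)"
    and k: "4 \<le> k" and r: "hzP k r"
  shows "good N d1 d2 k r"
proof -
  have S4: "good N d1 d2 k (0, mon i j)" if ij: "i + j = k" for i j
  proof (cases "2 \<le> i")
    case True
    have "good N d1 d2 k (mon (i-2) j * fst d1, mon (i-2) j * snd d1)"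
      by (rule Tp, rule hz_mon) (use ij True in simp)
    then show ?thesis by (rule good_eq) (use True in \<open>auto simp: d1 mon_mult intro!: mon_cong\<close>)
  next
    case False
    have "3 \<le> j" using ij k False by linarith
    then obtain j' where j: "j = j' + 3" using le_Suc_ex by (metis add.commute)
    have a: "good N d1 d2 k (0, mon i j' * snd N)"
      by (rule Tw22, rule hz_mon) (use ij j in simp)
    have b: "good N d1 d2 k (mon (i+1) j' * fst d1, mon (i+1) j' * snd d1)"
      by (rule Tp, rule hz_mon) (use ij j in simp)
    have "good N d1 d2 k ((0, mon i j' * snd N) - (mon (i+1) j' * fst d1, mon (i+1) j' * snd d1))"
      by (rule good_diff[OF a b])
    then show ?thesis by (rule good_eq) (simp add: N d1 j mon_mult algebra_simps; (rule mon_cong)?; simp)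
  qed
  have F2: "good N d1 d2 k (mon i j, 0)" if ij: "i + j = k" and i2: "2 \<le> i" for i j
  proof -
    obtain i' where i: "i = i' + 2" using i2 by (metis add.commute le_Suc_ex)
    have a: "good N d1 d2 k (mon i' j * fst d2, mon i' j * snd d2)"
      by (rule Tq, rule hz_mon) (use ij i in simp)
    have b: "good N d1 d2 k (0, mon i' (j+2))" by (rule S4) (use ij i in simp)
    have "good N d1 d2 k ((mon i' j * fst d2, mon i' j * snd d2) - (0, mon i' (j+2)))"
      by (rule good_diff[OF a b])
    then show ?thesis by (rule good_eq) (simp add: d2 i mon_mult algebra_simps; (rule mon_cong)?; simp)
  qed
  have F4: "good N d1 d2 k (mon i j, 0)" if ij: "i + j = k" for i j
  proof (cases "2 \<le> i")
    case True then show ?thesis using F2 ij by blast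
  next
    case False
    have "3 \<le> j" using ij k False by linarith
    then obtain j' where j: "j = j' + 3" using le_Suc_ex by (metis add.commute)
    have a: "good N d1 d2 k (mon i j' * snd N, 0)"
      by (rule Tw12, rule hz_mon) (use ij j in simp)
    have b: "good N d1 d2 k (mon (i+3) j', 0)" by (rule F2) (use ij j in simp_all)
    have "good N d1 d2 k ((mon i j' * snd N, 0) - (mon (i+3) j', 0))"
      by (rule good_diff[OF a b])
    then show ?thesis by (rule good_eq) (simp add: N j mon_mult algebra_simps numeral_eq_Suc add_Suc_right; (rule mon_cong)?; simp)
  qed
  show ?thesis by (rule good_from_monos[OF F4 S4 r])
qed

lemma key_gen:
  assumes nf: "nfc a b XX YY = N" and e1: "d1c a b = d1" and e2: "d2c a b = d2"
    and sol: "\<And>k r. 4 \<le> k \<Longrightarrow> hzP k r \<Longrightarrow> good N d1 d2 k r"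
    and G: "hzP 4 (G - N)"
  shows "ceq G N"
proof -
  have "ceq (nfc a b XX YY) G"
    by (rule key_cub) (use sol G in \<open>simp_all add: nf e1 e2\<close>)
  then show ?thesis using nf ceq_sym by metis
qed

lemma key1:
  assumes c2: "(2::'a::field) = 0" and G: "hzP 4 (G - (mon 3 0, mon 0 3 + mon 2 1 :: 'a S))"
  shows "ceq G (mon 3 0, mon 0 3 + mon 2 1)"
proof (rule key_gen[where a = "(1,0,0,0)" and b = "(0,1,0,1)"])
  show "nfc (1,0,0,0) (0,1,0,1) XX YY = (mon 3 0, mon 0 3 + mon 2 1 :: 'a S)"
    by (simp add: nfc_def cub_def mon_def algebra_simps)
  show "d1c (1,0,0,0) (0,1,0,1) = (mon 2 0, 0 :: 'a S)"
    by (simp add: d1c_def dXc_def mon_def S_two[OF c2] S_three[OF c2])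
  show "d2c (1,0,0,0) (0,1,0,1) = (0, mon 2 0 + mon 0 2 :: 'a S)"
    by (simp add: d2c_def dYc_def mon_def S_two[OF c2] S_three[OF c2])
  show "\<And>k r. 4 \<le> k \<Longrightarrow> hzP k r \<Longrightarrow> good (mon 3 0, mon 0 3 + mon 2 1) (mon 2 0, 0) (0, mon 2 0 + mon 0 2) k r"
    by (rule case1_sol) auto
qed (rule G)

lemma key2:
  assumes c2: "(2::'a::field) = 0" and G: "hzP 4 (G - (mon 3 0, mon 0 3 :: 'a S))"
  shows "ceq G (mon 3 0, mon 0 3)"
proof (rule key_gen[where a = "(1,0,0,0)" and b = "(0,0,0,1)"])
  show "nfc (1,0,0,0) (0,0,0,1) XX YY = (mon 3 0, mon 0 3 :: 'a S)"
    by (simp add: nfc_def cub_def mon_def algebra_simps)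
  show "d1c (1,0,0,0) (0,0,0,1) = (mon 2 0, 0 :: 'a S)"
    by (simp add: d1c_def dXc_def mon_def S_two[OF c2] S_three[OF c2])
  show "d2c (1,0,0,0) (0,0,0,1) = (0, mon 0 2 :: 'a S)"
    by (simp add: d2c_def dYc_def mon_def S_two[OF c2] S_three[OF c2])
  show "\<And>k r. 4 \<le> k \<Longrightarrow> hzP k r \<Longrightarrow> good (mon 3 0, mon 0 3) (mon 2 0, 0) (0, mon 0 2) k r"
    by (rule case2_sol) auto
qed (rule G)

lemma key3:
  assumes c2: "(2::'a::field) = 0" and lam: "lam \<noteq> 1"
    and G: "hzP 4 (G - (mon 3 0 + mon 2 1, cc lam * mon 2 1 + mon 0 3 :: 'a S))"
  shows "ceq G (mon 3 0 + mon 2 1, cc lam * mon 2 1 + mon 0 3)"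
proof (rule key_gen[where a = "(1,1,0,0)" and b = "(0,lam,0,1)"])
  show "nfc (1,1,0,0) (0,lam,0,1) XX YY = (mon 3 0 + mon 2 1, cc lam * mon 2 1 + mon 0 3 :: 'a S)"
    by (simp add: nfc_def cub_def mon_def algebra_simps)
  show "d1c (1,1,0,0) (0,lam,0,1) = (mon 2 0, 0 :: 'a S)"
    by (simp add: d1c_def dXc_def mon_def S_two[OF c2] S_three[OF c2])
  show "d2c (1,1,0,0) (0,lam,0,1) = (mon 2 0, cc lam * mon 2 0 + mon 0 2 :: 'a S)"
    by (simp add: d2c_def dYc_def mon_def S_two[OF c2] S_three[OF c2])
  show "\<And>k r. 4 \<le> k \<Longrightarrow> hzP k r \<Longrightarrow> good (mon 3 0 + mon 2 1, cc lam * mon 2 1 + mon 0 3) (mon 2 0, 0) (mon 2 0, cc lam * mon 2 0 + mon 0 2) k r"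
    by (rule case3_sol[OF _ _ _ lam c2]) auto
qed (rule G)

lemma key4:
  assumes c2: "(2::'a::field) = 0" and G: "hzP 4 (G - (mon 2 1, mon 3 0 + mon 0 3 :: 'a S))"
  shows "ceq G (mon 2 1, mon 3 0 + mon 0 3)"
proof (rule key_gen[where a = "(0,1,0,0)" and b = "(1,0,0,1)"])
  show "nfc (0,1,0,0) (1,0,0,1) XX YY = (mon 2 1, mon 3 0 + mon 0 3 :: 'a S)"
    by (simp add: nfc_def cub_def mon_def algebra_simps)
  show "d1c (0,1,0,0) (1,0,0,1) = (0, mon 2 0 :: 'a S)"
    by (simp add: d1c_def dXc_def mon_def S_two[OF c2] S_three[OF c2])
  show "d2c (0,1,0,0) (1,0,0,1) = (mon 2 0, mon 0 2 :: 'a S)"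
    by (simp add: d2c_def dYc_def mon_def S_two[OF c2] S_three[OF c2])
  show "\<And>k r. 4 \<le> k \<Longrightarrow> hzP k r \<Longrightarrow> good (mon 2 1, mon 3 0 + mon 0 3) (0, mon 2 0) (mon 2 0, mon 0 2) k r"
    by (rule case4_sol) auto
qed (rule G)

lemma propagate:
  assumes HM: "ceq H M" and key: "\<And>G. hzP 4 (G - M) \<Longrightarrow> ceq G M" and GH: "hzP 4 (G - H)"
  shows "ceq G M"
proof -
  obtain U \<Phi> where U: "GLS U" and P: "autS \<Phi>" and M: "M = appS U (mapP \<Phi> H)"
    using HM by (auto simp: ceq_def)
  define G' where "G' = appS U (mapP \<Phi> G)"
  obtain u11 u12 u21 u22 where UU: "U = ((u11,u12),(u21,u22))" by (metis prod.exhaust)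
  have "G' - M = appS U (mapP \<Phi> (G - H))"
    unfolding G'_def M UU
    by (cases G; cases H) (simp add: appS_def mapP_def aut_diff[OF P] algebra_simps)
  moreover have "hzP 4 (appS U (mapP \<Phi> (G - H)))"
    by (rule hzP_appM[OF hzM_0 hzP_map[OF P GH]]) simp
  ultimately have "ceq G' M" using key by simp
  moreover have "ceq G G'" unfolding ceq_def G'_def using U P by blast
  ultimately show ?thesis by (rule ceq_trans[rotated])
qed

definition Tm :: "'a::field ps2 \<Rightarrow> 'a S" where "Tm f = mk (\<lambda>i j. f (i,j))"
definition Fm :: "'a::field S \<Rightarrow> 'a ps2" where "Fm F = (\<lambda>(i,j). co F i j)"
definition TT :: "'a::field ps2 \<times> 'a ps2 \<Rightarrow> 'a S \<times> 'a S" where "TT f = (Tm (fst f), Tm (snd f))"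

lemma co_Tm[simp]: "co (Tm f) i j = f (i,j)" by (simp add: Tm_def)
lemma Tm_Fm[simp]: "Tm (Fm F) = F" by (rule S_eqI) (simp add: Fm_def)
lemma Fm_Tm[simp]: "Fm (Tm f) = f" by (rule ext) (auto simp: Fm_def)
lemma Tm_inj: "Tm f = Tm g \<Longrightarrow> f = g" by (metis Fm_Tm)

lemma Tm_add: "Tm (f +\<^sub>p g) = Tm f + Tm g" by (rule S_eqI) (simp add: ps_add_def)
lemma Tm_sub: "Tm (f -\<^sub>p g) = Tm f - Tm g" by (rule S_eqI) (simp add: ps_sub_def)
lemma Tm_mul: "Tm (f *\<^sub>p g) = Tm f * Tm g" by (rule S_eqI) (simp add: ps_mul_def co_mult)
lemma Tm_const: "Tm (ps_const c) = cc c" by (rule S_eqI) (simp add: ps_const_def co_cc)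
lemma Tm_mon: "Tm (ps_mon c a b) = cc c * mon a b"
  by (rule S_eqI) (simp add: ps_mon_def mon_def co_XY)

lemma Fm_add: "Fm (F + G) = Fm F +\<^sub>p Fm G" by (metis Tm_Fm Tm_add Fm_Tm)
lemma Fm_mul: "Fm (F * G) = Fm F *\<^sub>p Fm G" by (metis Tm_Fm Tm_mul Fm_Tm)
lemma Fm_cc: "Fm (cc c) = ps_const c" by (metis Tm_const Fm_Tm)

lemma bij_Tm: "bij Tm"
  by (rule bijI[OF injI surjI]) (erule Tm_inj, rule Tm_Fm)
lemma bij_Fm: "bij Fm"
  by (rule bijI[OF injI surjI]) (metis Tm_Fm, rule Fm_Tm)

lemma unit_iff: "ps_unit u \<longleftrightarrow> unitS (Tm u)"
proof
  assume "ps_unit u"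
  then obtain v where "u *\<^sub>p v = ps_const 1" by (auto simp: ps_unit_def)
  then have "Tm u * Tm v = 1" by (metis Tm_mul Tm_const cc_1)
  then show "unitS (Tm u)" by (auto simp: unitS_def)
next
  assume "unitS (Tm u)"
  then obtain V where "Tm u * V = 1" by (auto simp: unitS_def)
  then have "u *\<^sub>p Fm V = ps_const 1" by (metis Fm_Tm Fm_mul Fm_cc cc_1)
  then show "ps_unit u" by (auto simp: ps_unit_def)
qed

lemma ce_to: assumes "contact_equiv f g" shows "ceq (TT f) (TT g)"
proof -
  obtain U \<phi> where U: "in_GL2 U" and A: "is_aut \<phi>" and g: "g = mat_app U (\<phi> (fst f), \<phi> (snd f))"
    using assms by (auto simp: contact_equiv_def)
  obtain u11 u12 u21 u22 where UU: "U = ((u11,u12),(u21,u22))" by (metis prod.exhaust)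
  define \<Phi> where "\<Phi> = Tm \<circ> \<phi> \<circ> Fm"
  have aut: "autS \<Phi>"
    unfolding autS_def
  proof (intro conjI allI)
    show "bij \<Phi>" unfolding \<Phi>_def using A bij_Tm bij_Fm by (auto simp: is_aut_def intro: bij_comp)
    fix F G
    show "\<Phi> (F + G) = \<Phi> F + \<Phi> G" using A by (simp add: \<Phi>_def Fm_add is_aut_def Tm_add)
    show "\<Phi> (F * G) = \<Phi> F * \<Phi> G" using A by (simp add: \<Phi>_def Fm_mul is_aut_def Tm_mul)
  next
    fix c show "\<Phi> (cc c) = cc c" using A by (simp add: \<Phi>_def Fm_cc is_aut_def Tm_const)
  qed
  define U' where "U' = ((Tm u11, Tm u12), (Tm u21, Tm u22))"
  have "GLS U'" using U by (simp add: UU U'_def in_GL2_def GLS_def detS_def unit_iff Tm_sub Tm_mul)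
  moreover have "TT g = appS U' (mapP \<Phi> (TT f))"
    by (simp add: g UU U'_def TT_def mat_app_def appS_def mapP_def \<Phi>_def Tm_add Tm_mul)
  ultimately show ?thesis unfolding ceq_def using aut by blast
qed

lemma ce_from: assumes "ceq (TT f) (TT g)" shows "contact_equiv f g"
proof -
  obtain U' \<Phi> where U: "GLS U'" and A: "autS \<Phi>" and g: "TT g = appS U' (mapP \<Phi> (TT f))"
    using assms by (auto simp: ceq_def)
  obtain v11 v12 v21 v22 where UU: "U' = ((v11,v12),(v21,v22))" by (metis prod.exhaust)
  define \<phi> where "\<phi> = Fm \<circ> \<Phi> \<circ> Tm"
  have aut: "is_aut \<phi>"
    unfolding is_aut_def
  proof (intro conjI allI)
    show "bij \<phi>" unfolding \<phi>_def using A bij_Tm bij_Fm by (auto simp: autS_def intro: bij_comp)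
    fix f g
    show "\<phi> (f +\<^sub>p g) = \<phi> f +\<^sub>p \<phi> g" using A by (simp add: \<phi>_def Tm_add autS_def Fm_add)
    show "\<phi> (f *\<^sub>p g) = \<phi> f *\<^sub>p \<phi> g" using A by (simp add: \<phi>_def Tm_mul autS_def Fm_mul)
  next
    fix c show "\<phi> (ps_const c) = ps_const c" using A by (simp add: \<phi>_def Tm_const autS_def Fm_cc)
  qed
  define U where "U = ((Fm v11, Fm v12), (Fm v21, Fm v22))"
  have "in_GL2 U" using U by (simp add: UU U_def in_GL2_def GLS_def detS_def unit_iff Tm_sub Tm_mul)
  moreover have "TT (mat_app U (\<phi> (fst f), \<phi> (snd f))) = appS U' (mapP \<Phi> (TT f))"
    by (simp add: UU U_def TT_def mat_app_def appS_def mapP_def \<phi>_def Tm_add Tm_mul)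
  then have "TT g = TT (mat_app U (\<phi> (fst f), \<phi> (snd f)))" using g by simp
  then have "g = mat_app U (\<phi> (fst f), \<phi> (snd f))"
    by (cases g; cases "mat_app U (\<phi> (fst f), \<phi> (snd f))") (auto simp: TT_def dest: Tm_inj)
  ultimately show ?thesis unfolding contact_equiv_def using aut by blast
qed

lemma jet_hz: assumes "jet k g = jet k h" shows "hzP (k+1) (TT g - TT h)"
proof -
  have e1: "ps_jet k (fst g) = ps_jet k (fst h)" and e2: "ps_jet k (snd g) = ps_jet k (snd h)"
    using assms by (simp_all add: jet_def)
  have "hz (k+1) (Tm (fst g) - Tm (fst h))" unfolding hz_def
  proof (intro allI impI)
    fix i j :: nat assume ij: "i + j < k + 1"
    have "ps_jet k (fst g) (i,j) = ps_jet k (fst h) (i,j)" using e1 by simp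
    then show "co (Tm (fst g) - Tm (fst h)) i j = 0" using ij by (simp add: ps_jet_def)
  qed
  moreover have "hz (k+1) (Tm (snd g) - Tm (snd h))" unfolding hz_def
  proof (intro allI impI)
    fix i j :: nat assume ij: "i + j < k + 1"
    have "ps_jet k (snd g) (i,j) = ps_jet k (snd h) (i,j)" using e2 by simp
    then show "co (Tm (snd g) - Tm (snd h)) i j = 0" using ij by (simp add: ps_jet_def)
  qed
  ultimately show ?thesis by (simp add: hzP_def TT_def)
qed

lemma jet_self: "hzP 4 (TT f - TT (jet 3 f))"
proof -
  have "hz 4 (Tm x - Tm (ps_jet 3 x))" for x :: "'a::field ps2"
    unfolding hz_def by (simp add: ps_jet_def)
  then show ?thesis by (simp add: hzP_def TT_def jet_def)
qed

theorem proposition6p3: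
  fixes f :: "('a::field) ps2 \<times> 'a ps2" and N :: "'a ps2 \<times> 'a ps2"
  assumes "alg_closed TYPE('a)"
    and "(2::'a) = 0"
    and "N = (ps_mon 1 3 0, ps_mon 1 0 3 +\<^sub>p ps_mon 1 2 1)
       \<or> N = (ps_mon 1 3 0, ps_mon 1 0 3)
       \<or> (\<exists>lam::'a. lam \<noteq> 1 \<and> N = (ps_mon 1 3 0 +\<^sub>p ps_mon 1 2 1, ps_mon 1 0 3 +\<^sub>p ps_mon lam 2 1))
       \<or> N = (ps_mon 1 2 1, ps_mon 1 3 0 +\<^sub>p ps_mon 1 0 3)"
    and "contact_equiv (jet 3 f) N"
  shows "determined 3 (jet 3 f) \<and> contact_equiv f N"
proof -
  note c2 = assms(2)
  have key: "\<And>G. hzP 4 (G - TT N) \<Longrightarrow> ceq G (TT N)"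
    using assms(3)
  proof (elim disjE exE conjE)
    fix G assume N: "N = (ps_mon 1 3 0, ps_mon 1 0 3 +\<^sub>p ps_mon 1 2 1)" and G: "hzP 4 (G - TT N)"
    have e: "TT N = (mon 3 0, mon 0 3 + mon 2 1)" by (simp add: N TT_def Tm_mon Tm_add)
    show "ceq G (TT N)" unfolding e by (rule key1[OF c2]) (use G e in simp)
  next
    fix G assume N: "N = (ps_mon 1 3 0, ps_mon 1 0 3)" and G: "hzP 4 (G - TT N)"
    have e: "TT N = (mon 3 0, mon 0 3)" by (simp add: N TT_def Tm_mon)
    show "ceq G (TT N)" unfolding e by (rule key2[OF c2]) (use G e in simp)
  next
    fix G lam assume lam: "lam \<noteq> 1" and N: "N = (ps_mon 1 3 0 +\<^sub>p ps_mon 1 2 1, ps_mon 1 0 3 +\<^sub>p ps_mon lam 2 1)"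
      and G: "hzP 4 (G - TT N)"
    have e: "TT N = (mon 3 0 + mon 2 1, cc lam * mon 2 1 + mon 0 3)" by (simp add: N TT_def Tm_mon Tm_add add.commute)
    show "ceq G (TT N)" unfolding e by (rule key3[OF c2 lam]) (use G e in simp)
  next
    fix G assume N: "N = (ps_mon 1 2 1, ps_mon 1 3 0 +\<^sub>p ps_mon 1 0 3)" and G: "hzP 4 (G - TT N)"
    have e: "TT N = (mon 2 1, mon 3 0 + mon 0 3)" by (simp add: N TT_def Tm_mon Tm_add)
    show "ceq G (TT N)" unfolding e by (rule key4[OF c2]) (use G e in simp)
  qed
  have hN: "ceq (TT (jet 3 f)) (TT N)" by (rule ce_to[OF assms(4)])
  have det: "determined 3 (jet 3 f)"
    unfolding determined_def
  proof (intro allI impI)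
    fix g assume "jet 3 g = jet 3 (jet 3 f)"
    then have "hzP (3+1) (TT g - TT (jet 3 f))" by (rule jet_hz)
    then have "ceq (TT g) (TT N)" using propagate[OF hN key] by simp
    then have "ceq (TT g) (TT (jet 3 f))" using ceq_trans ceq_sym[OF hN] by blast
    then show "contact_equiv g (jet 3 f)" by (rule ce_from)
  qed
  have "ceq (TT f) (TT N)" by (rule propagate[OF hN key jet_self])
  then have "contact_equiv f N" by (rule ce_from)
  with det show ?thesis by blast
qed

end
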